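(* Assume $\hat{\Omega}_{1:r} = \Omega_{1:r}$. Then $\Sigma$ and $\hat{\Sigma}$ satisfy: (T1) (MSS) For any $\rho \geq \rho(\boldsymbol{\mathcal{A}})$ and its corresponding $\tau$, any $\hat{\rho} \geq \rho(\hat{\boldsymbol{\mathcal{A}}})$ and its corresponding $\bar{\tau}$, \[ \rho(\hat{\boldsymbol{\mathcal{A}}}) - \rho(\boldsymbol{\mathcal{A}}) \leq \tau \epsilon_\rho + (\rho - \rho(\boldsymbol{\mathcal{A}})),\qquad \rho(\boldsymbol{\mathcal{A}}) - \rho(\hat{\boldsymbol{\mathcal{A}}}) \leq \bar{\tau} \epsilon_\rho + (\hat{\rho} - \rho(\hat{\boldsymbol{\mathcal{A}}})),\] where $\epsilon_\rho:= \sqrt{s} ((2 \bar{A} + \epsilon_{\mathbf{A}}) \epsilon_{\mathbf{A}} + \bar{A}^2 \epsilon_{\mathbf{T}})$. (T2) (Uniform stability) For any $\xi \geq \xi(\mathbf{A}_{1:s})$ and its corresponding $\kappa$, any $\hat{\xi} \geq \xi(\hat{\mathbf{A}}_{1:r})$ and its corresponding $\bar{\kappa}$, \[ \xi(\hat{\mathbf{A}}_{1:r}) - \xi(\mathbf{A}_{1:s}) \leq \kappa \epsilon_{\mathbf{A}} + (\xi - \xi(\mathbf{A}_{1:s})),\qquad \xi(\mathbf{A}_{1:s}) - \xi(\hat{\mathbf{A}}_{1:r}) \leq \bar{\kappa} \epsilon_{\mathbf{A}} + (\hat{\xi} - \xi(\hat{\mathbf{A}}_{1:r})).\]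
   Context: $\Sigma$ is an MJS $\mathbf{x}_{t+1}=\mathbf{A}_{\omega_t}\mathbf{x}_t+\mathbf{B}_{\omega_t}\mathbf{u}_t$ with $s$ modes and ergodic Markov matrix $\mathbf{T}$; given a partition $\Omega_{1:r}$ of $[s]$, $\sum_k\sum_{i,i'\in\Omega_k}\|\mathbf{A}_i-\mathbf{A}_{i'}\|_F\le\epsilon_{\mathbf{A}}$, similarly for $\mathbf{B}$ with $\epsilon_{\mathbf{B}}$, and $\mathbf{T}$ is $\epsilon_{\mathbf{T}}$-approximately lumpable ($\sum_{k,l}\sum_{i,i'\in\Omega_k}|\sum_{j\in\Omega_l}\mathbf{T}(i,j)-\sum_{j\in\Omega_l}\mathbf{T}(i',j)|\le\epsilon_{\mathbf{T}}$) or aggregatable ($\sum_k\sum_{i,i'\in\Omega_k}\|\mathbf{T}(i,:)-\mathbf{T}(i',:)\|_1\le\epsilon_{\mathbf{T}}$). Given estimated partition $\hat{\Omega}_{1:r}$, the reduced MJS $\hat{\Sigma}$ has $\hat{\mathbf{A}}_k$, $\hat{\mathbf{B}}_k$ the averages of $\mathbf{A}_i$, $\mathbf{B}_i$ over $i\in\hat{\Omega}_k$ and $\hat{\mathbf{T}}(k,l)=\frac{1}{|\hat{\Omega}_k|}\sum_{i\in\hat{\Omega}_k,j\in\hat{\Omega}_l}\mathbf{T}(i,j)$. The expanded MJS has $s$ modes with $\bar{\mathbf{A}}_i=\hat{\mathbf{A}}_k$ for $i\in\hat{\Omega}_k$ and Markov matrix $\bar{\mathbf{T}}$ with $\|\bar{\mathbf{T}}-\mathbf{T}\|_\infty\le\epsilon_{\mathbf{T}}$,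 $\|\bar{\mathbf{T}}-\mathbf{T}\|_F\le\epsilon_{\mathbf{T}}$, and $\sum_{j\in\hat{\Omega}_l}\bar{\mathbf{T}}(i,j)=\hat{\mathbf{T}}(k,l)$ for $i\in\hat{\Omega}_k$. Augmented matrices: $\boldsymbol{\mathcal{A}}$ ($sn^2\times sn^2$) with $ij$-th block $\mathbf{T}(j,i)\mathbf{A}_j\otimes\mathbf{A}_j$, $\hat{\boldsymbol{\mathcal{A}}}$ ($rn^2\times rn^2$) with blocks $\hat{\mathbf{T}}(j,i)\hat{\mathbf{A}}_j\otimes\hat{\mathbf{A}}_j$, $\bar{\boldsymbol{\mathcal{A}}}$ with blocks $\bar{\mathbf{T}}(j,i)\bar{\mathbf{A}}_j\otimes\bar{\mathbf{A}}_j$; $\rho(\cdot)$ is the spectral radius, $\xi(\cdot)$ the joint spectral radius. $\tau:=\sup_{k\in\mathbb{N}}\|\boldsymbol{\mathcal{A}}^k\|/\rho^k$, $\bar{\tau}:=\sup_k\|\bar{\boldsymbol{\mathcal{A}}}^k\|/\hat{\rho}^k$, $\kappa:=\sup_k\max_{\omega_{1:k}\in[s]^k}\|\mathbf{A}_{\omega_1}\cdots\mathbf{A}_{\omega_k}\|/\xi^k$, $\bar{\kappa}:=\sup_k\max_{\omega_{1:k}}\|\bar{\mathbf{A}}_{\omega_1}\cdots\bar{\mathbf{A}}_{\omega_k}\|/\hat{\xi}^k$. The scalar $\bar{A}:=\max_i\|\mathbf{A}_i\|$. *)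

theory Defs
  imports "HOL-Analysis.Analysis"
begin

text \<open>Modes of the MJS are the elements of a finite type 's (so s = CARD('s));
  the clusters are the elements of a finite type 'r (so r = CARD('r)); the partition
  Omega_{1:r} is given by a surjective cluster map cl :: 's => 'r with
  Omega_k = {i. cl i = k}.  State dimension n = CARD('n), input dimension p = CARD('p).
  Matrices are HOL-Analysis matrices real^'c^'r; norm on them is the Frobenius norm,
  spec_norm is the spectral (operator 2-) norm.\<close>

definition spec_norm :: "real^'m^'k \<Rightarrow> real" where
  "spec_norm M = onorm (\<lambda>x. M *v x)"

definition frob_norm :: "real^'m^'k \<Rightarrow> real" where
  "frob_norm M = sqrt (\<Sum>i\<in>UNIV. \<Sum>j\<in>UNIV. (M $ i $ j)^2)"

definition inf_norm :: "('s::finite \<Rightarrow> 's \<Rightarrow> real) \<Rightarrow> real" where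
  "inf_norm M = Max ((\<lambda>i. \<Sum>j\<in>UNIV. \<bar>M i j\<bar>) ` UNIV)"

definition frob_norm_fun :: "('s::finite \<Rightarrow> 's \<Rightarrow> real) \<Rightarrow> real" where
  "frob_norm_fun M = sqrt (\<Sum>i\<in>UNIV. \<Sum>j\<in>UNIV. (M i j)^2)"

fun mpow :: "real^'m^'m \<Rightarrow> nat \<Rightarrow> real^'m^'m" where
  "mpow M 0 = mat 1"
| "mpow M (Suc k) = M ** mpow M k"

definition spectrum_real :: "real^'m^'m \<Rightarrow> complex set" where
  "spectrum_real M = {c. \<exists>v :: complex^'m. v \<noteq> 0 \<and>
      (\<chi> i j. complex_of_real (M $ i $ j)) *v v = c *s v}"

definition spectral_radius :: "real^'m^'m \<Rightarrow> real" where
  "spectral_radius M = Max (cmod ` spectrum_real M)"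

definition kron :: "real^'n^'n \<Rightarrow> real^'n^'n \<Rightarrow> real^('n \<times> 'n)^('n \<times> 'n)" where
  "kron A B = (\<chi> x y. A $ fst x $ fst y * B $ snd x $ snd y)"

text \<open>augmented (second moment) matrix: ij-th block is T(j,i) A_j (x) A_j\<close>
definition aug :: "('m::finite \<Rightarrow> 'm \<Rightarrow> real) \<Rightarrow> ('m \<Rightarrow> real^'n^'n)
    \<Rightarrow> real^('m \<times> ('n \<times> 'n))^('m \<times> ('n \<times> 'n))" where
  "aug T A = (\<chi> x y. T (fst y) (fst x) * kron (A (fst y)) (A (fst y)) $ snd x $ snd y)"

definition word_prod :: "('m \<Rightarrow> real^'n^'n) \<Rightarrow> 'm list \<Rightarrow> real^'n^'n" where
  "word_prod A w = foldr (\<lambda>i M. A i ** M) w (mat 1)"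

definition max_prod_norm :: "('m::finite \<Rightarrow> real^'n^'n) \<Rightarrow> nat \<Rightarrow> real" where
  "max_prod_norm A k = Max ((\<lambda>w. spec_norm (word_prod A w)) ` {w. length w = k})"

definition jsr :: "('m::finite \<Rightarrow> real^'n^'n) \<Rightarrow> real" where
  "jsr A = lim (\<lambda>k. root k (max_prod_norm A k))"

definition tau_const :: "real^'m^'m \<Rightarrow> real \<Rightarrow> real" where
  "tau_const M \<rho> = (SUP k. spec_norm (mpow M k) / \<rho> ^ k)"

definition kappa_const :: "('m::finite \<Rightarrow> real^'n^'n) \<Rightarrow> real \<Rightarrow> real" where
  "kappa_const A \<xi> = (SUP k. max_prod_norm A k / \<xi> ^ k)"

definition markov :: "('s::finite \<Rightarrow> 's \<Rightarrow> real) \<Rightarrow> bool" where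
  "markov T \<longleftrightarrow> (\<forall>i j. 0 \<le> T i j) \<and> (\<forall>i. (\<Sum>j\<in>UNIV. T i j) = 1)"

fun fpow :: "('s::finite \<Rightarrow> 's \<Rightarrow> real) \<Rightarrow> nat \<Rightarrow> 's \<Rightarrow> 's \<Rightarrow> real" where
  "fpow T 0 = (\<lambda>i j. if i = j then 1 else 0)"
| "fpow T (Suc k) = (\<lambda>i j. \<Sum>l\<in>UNIV. T i l * fpow T k l j)"

text \<open>ergodic (irreducible and aperiodic) finite chain = primitive transition matrix\<close>
definition ergodic :: "('s::finite \<Rightarrow> 's \<Rightarrow> real) \<Rightarrow> bool" where
  "ergodic T \<longleftrightarrow> markov T \<and> (\<exists>k. \<forall>i j. fpow T k i j > 0)"

definition cluster :: "('s \<Rightarrow> 'r) \<Rightarrow> 'r \<Rightarrow> 's set" where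
  "cluster cl k = {i. cl i = k}"

definition approx_lumpable :: "('s::finite \<Rightarrow> 's \<Rightarrow> real) \<Rightarrow> ('s \<Rightarrow> 'r::finite) \<Rightarrow> real \<Rightarrow> bool" where
  "approx_lumpable T cl \<epsilon> \<longleftrightarrow>
     (\<Sum>k\<in>UNIV. \<Sum>l\<in>UNIV. \<Sum>i\<in>cluster cl k. \<Sum>i'\<in>cluster cl k.
        \<bar>(\<Sum>j\<in>cluster cl l. T i j) - (\<Sum>j\<in>cluster cl l. T i' j)\<bar>) \<le> \<epsilon>"

definition approx_aggregatable :: "('s::finite \<Rightarrow> 's \<Rightarrow> real) \<Rightarrow> ('s \<Rightarrow> 'r::finite) \<Rightarrow> real \<Rightarrow> bool" where
  "approx_aggregatable T cl \<epsilon> \<longleftrightarrow>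
     (\<Sum>k\<in>UNIV. \<Sum>i\<in>cluster cl k. \<Sum>i'\<in>cluster cl k. \<Sum>j\<in>UNIV. \<bar>T i j - T i' j\<bar>) \<le> \<epsilon>"

definition red_mat :: "('s::finite \<Rightarrow> real^'c^'n) \<Rightarrow> ('s \<Rightarrow> 'r) \<Rightarrow> 'r \<Rightarrow> real^'c^'n" where
  "red_mat A cl k = (1 / real (card (cluster cl k))) *\<^sub>R (\<Sum>i\<in>cluster cl k. A i)"

definition red_T :: "('s::finite \<Rightarrow> 's \<Rightarrow> real) \<Rightarrow> ('s \<Rightarrow> 'r) \<Rightarrow> 'r \<Rightarrow> 'r \<Rightarrow> real" where
  "red_T T cl k l = (1 / real (card (cluster cl k))) * (\<Sum>i\<in>cluster cl k. \<Sum>j\<in>cluster cl l. T i j)"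

end

theory Submission imports Defs "Jordan_Normal_Form.Char_Poly" begin
hide_const (open) Matrix.mat Matrix.vec Determinant.det Matrix.transpose_mat Matrix.row Matrix.col
no_notation Matrix.vec_index (infixl "$" 100)
no_notation Matrix.scalar_prod (infix "\<bullet>" 70)
definition cM :: "real^'m^'m \<Rightarrow> complex^'m^'m" where
  "cM M = (\<chi> i j. complex_of_real (M $ i $ j))"

lemma spectrum_JNF:
  fixes M :: "real^'m::finite^'m"
  shows "finite (spectrum_real M) \<and> spectrum_real M \<noteq> {}"
proof -
  define n where "n = CARD('m)"
  obtain f where f: "bij_betw f {0..<n} (UNIV::'m set)"
    using ex_bij_betw_nat_finite[of "UNIV::'m set"] unfolding n_def by auto
  define g where "g = inv_into {0..<n} f"
  have fg: "f (g x) = x" for x using f unfolding g_def by (meson UNIV_I bij_betw_inv_into_right)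
  have gl: "g x < n" for x using f unfolding g_def
    by (metis UNIV_I atLeastLessThan_iff bij_betw_def inv_into_into)
  have gf: "i < n \<Longrightarrow> g (f i) = i" for i using f unfolding g_def
    by (simp add: bij_betw_inv_into_left)
  define J where "J = Matrix.mat n n (\<lambda>(i,j). cM M $ f i $ f j)"
  have J: "J \<in> carrier_mat n n" unfolding J_def by auto
  have sumre: "(\<Sum>j<n. h (f j)) = (\<Sum>x\<in>UNIV. h x)" for h :: "'m \<Rightarrow> complex"
    using sum.reindex_bij_betw[OF f, of h] by (simp add: lessThan_atLeast0)
  have eq: "spectrum_real M = Collect (eigenvalue J)"
  proof (rule Set.set_eqI, rule iffI)
    fix c assume "c \<in> spectrum_real M"
    then obtain u :: "complex^'m" where u: "u \<noteq> 0" "cM M *v u = c *s u"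
      unfolding spectrum_real_def cM_def by auto
    define v where "v = Matrix.vec n (\<lambda>i. u $ f i)"
    have "v \<noteq> 0\<^sub>v n"
    proof
      assume "v = 0\<^sub>v n"
      hence "u $ f i = 0" if "i < n" for i using that unfolding v_def
        by (metis index_vec index_zero_vec(1))
      hence "u $ x = 0" for x using gl fg by metis
      thus False using u(1) by (simp add: Finite_Cartesian_Product.vec_eq_iff)
    qed
    moreover have "J *\<^sub>v v = c \<cdot>\<^sub>v v"
    proof (rule eq_vecI)
      fix i assume "i < dim_vec (c \<cdot>\<^sub>v v)"
      hence i: "i < n" unfolding v_def by simp
      have "vec_index (J *\<^sub>v v) i = (\<Sum>j<n. cM M $ f i $ f j * u $ f j)"
        using i unfolding J_def v_def by (simp add: scalar_prod_def Matrix.row_def lessThan_atLeast0)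
      also have "\<dots> = (cM M *v u) $ f i"
        using sumre[of "\<lambda>x. cM M $ f i $ x * u $ x"] by (simp add: matrix_vector_mult_def)
      also have "\<dots> = vec_index (c \<cdot>\<^sub>v v) i" using u(2) i unfolding v_def by simp
      finally show "vec_index (J *\<^sub>v v) i = vec_index (c \<cdot>\<^sub>v v) i" .
    qed (simp add: J_def v_def)
    ultimately have "eigenvector J v c" unfolding eigenvector_def J_def v_def by auto
    thus "c \<in> Collect (eigenvalue J)" unfolding eigenvalue_def by auto
  next
    fix c assume "c \<in> Collect (eigenvalue J)"
    then obtain v where v: "v \<in> carrier_vec n" "v \<noteq> 0\<^sub>v n" "J *\<^sub>v v = c \<cdot>\<^sub>v v"
      unfolding eigenvalue_def eigenvector_def J_def by auto
    define u where "u = (\<chi> x. vec_index v (g x))"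
    have "u \<noteq> 0"
    proof
      assume "u = 0"
      hence "vec_index v i = 0" if "i < n" for i using that gf
        unfolding u_def by (metis vec_lambda_beta zero_index)
      thus False using v(1,2) by (auto simp: vec_eq_iff)
    qed
    moreover have "cM M *v u = c *s u"
    proof (rule Finite_Cartesian_Product.vec_eq_iff[THEN iffD2, rule_format])
      fix x
      have "(cM M *v u) $ x = (\<Sum>j<n. cM M $ f (g x) $ f j * u $ f j)"
        using sumre[of "\<lambda>y. cM M $ f (g x) $ y * u $ y"] fg by (simp add: matrix_vector_mult_def)
      also have "\<dots> = vec_index (J *\<^sub>v v) (g x)"
        using gl[of x] v(1) gf unfolding J_def u_def
        by (simp add: scalar_prod_def Matrix.row_def lessThan_atLeast0)
      also have "\<dots> = (c *s u) $ x" using v(3) gl[of x] v(1) unfolding u_def by simp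
      finally show "(cM M *v u) $ x = (c *s u) $ x" .
    qed
    ultimately show "c \<in> spectrum_real M" unfolding spectrum_real_def cM_def by auto
  qed
  have ceq: "Collect (eigenvalue J) = {x. poly (char_poly J) x = 0}"
    using eigenvalue_root_char_poly[OF J] by auto
  have fin: "finite (Collect (eigenvalue J))"
  proof -
    from degree_monic_char_poly[OF J] have "char_poly J \<noteq> 0" by auto
    from poly_roots_finite[OF this] show ?thesis
      unfolding ceq .
  qed
  have ne: "Collect (eigenvalue J) \<noteq> {}"
  proof -
    have "n > 0" unfolding n_def by simp
    from degree_monic_char_poly[OF J] have d: "degree (char_poly J) > 0" using \<open>n > 0\<close> by auto
    hence "\<not> constant (poly (char_poly J))" by (simp add: constant_degree)
    from fundamental_theorem_of_algebra[OF this] show ?thesis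
      unfolding ceq by auto
  qed
  show ?thesis using eq fin ne by simp
qed


lemma normsq_vec: "(norm (x::'a::real_normed_vector^'n))\<^sup>2 = (\<Sum>i\<in>UNIV. (norm (x $ i))\<^sup>2)"
  unfolding norm_vec_def L2_set_def by (simp add: sum_nonneg)

lemma norm_smult_cvec: "norm (c *s (v::complex^'n)) = cmod c * norm v"
proof -
  have "(norm (c *s v))\<^sup>2 = (cmod c * norm v)\<^sup>2"
    unfolding normsq_vec power_mult_distrib by (simp add: norm_mult power_mult_distrib sum_distrib_left)
  thus ?thesis by (simp add: power2_eq_iff_nonneg)
qed

lemma cM_mult: "cM (M ** N) = cM M ** cM N"
  by (simp add: cM_def matrix_matrix_mult_def Finite_Cartesian_Product.vec_eq_iff)

lemma cmul_smult: "(A::'a::comm_semiring_1^'n^'m) *v (c *s x) = c *s (A *v x)"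
  by (simp add: matrix_vector_mult_def Finite_Cartesian_Product.vec_eq_iff sum_distrib_left mult.left_commute)

lemma cM_mpow_eig:
  assumes "cM M *v v = c *s v"
  shows "cM (mpow M k) *v v = c ^ k *s v"
proof (induction k)
  case 0
  have "cM (mat 1) = mat 1" by (simp add: cM_def Finite_Cartesian_Product.mat_def Finite_Cartesian_Product.vec_eq_iff)
  then have "cM (mpow M 0) *v v = v" by (metis mpow.simps(1) matrix_vector_mul_lid)
  then show ?case by (simp add: Finite_Cartesian_Product.vec_eq_iff)
next
  case (Suc k)
  have "cM (mpow M (Suc k)) *v v = cM M *v (cM (mpow M k) *v v)"
    by (simp add: cM_mult matrix_vector_mul_assoc)
  also have "\<dots> = c ^ Suc k *s v" using Suc assms by (simp add: cmul_smult)
  finally show ?case .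
qed

lemma cM_norm_bound:
  fixes M :: "real^'m::finite^'k::finite"
  assumes b: "\<And>x. norm (M *v x) \<le> c * norm x" and c: "c \<ge> 0"
  shows "norm ((\<chi> i j. complex_of_real (M $ i $ j)) *v v) \<le> c * norm v"
proof -
  define re where "re = (\<chi> i. Re (v $ i))"
  define im where "im = (\<chi> i. Im (v $ i))"
  have comp: "((\<chi> i j. complex_of_real (M $ i $ j)) *v v) $ i = Complex ((M *v re) $ i) ((M *v im) $ i)" for i
    by (simp add: matrix_vector_mult_def re_def im_def complex_eq_iff)
  have "(norm ((\<chi> i j. complex_of_real (M $ i $ j)) *v v))\<^sup>2 = (norm (M *v re))\<^sup>2 + (norm (M *v im))\<^sup>2"
    unfolding normsq_vec comp by (simp add: cmod_power2 sum.distrib)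
  also have "\<dots> \<le> (c * norm re)\<^sup>2 + (c * norm im)\<^sup>2"
    by (intro add_mono power_mono b) auto
  also have "\<dots> = c\<^sup>2 * ((norm re)\<^sup>2 + (norm im)\<^sup>2)" by (simp add: algebra_simps power_mult_distrib)
  also have "(norm re)\<^sup>2 + (norm im)\<^sup>2 = (norm v)\<^sup>2"
    unfolding normsq_vec re_def im_def by (simp add: cmod_power2 sum.distrib)
  finally have "(norm ((\<chi> i j. complex_of_real (M $ i $ j)) *v v))\<^sup>2 \<le> (c * norm v)\<^sup>2"
    by (simp add: power_mult_distrib)
  thus ?thesis using c by (simp add: power2_le_iff_abs_le)
qed

lemma pow_growth_le:
  fixes a r K :: real
  assumes a: "a \<ge> 0" and r: "r \<ge> 0" and b: "\<And>N. a ^ N \<le> K * r ^ N"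
  shows "a \<le> r"
proof (rule ccontr)
  assume "\<not> a \<le> r" hence ar: "a > r" by simp
  show False
  proof (cases "r = 0")
    case True thus False using b[of 1] ar by simp
  next
    case False
    hence rp: "r > 0" using r by simp
    have "1 < a / r" using ar rp by simp
    from real_arch_pow[OF this] obtain N where "K < (a / r) ^ N" by blast
    moreover have "(a / r) ^ N \<le> K" using b[of N] rp by (simp add: power_divide pos_divide_le_eq)
    ultimately show False by simp
  qed
qed

lemma spectral_radius_le:
  fixes M :: "real^'m::finite^'m"
  assumes b: "\<And>N x. norm (mpow M N *v x) \<le> K * r ^ N * norm x" and r: "r \<ge> 0" and K: "K \<ge> 0"
  shows "spectral_radius M \<le> r"
proof -
  have fin: "finite (cmod ` spectrum_real M)" and ne: "cmod ` spectrum_real M \<noteq> {}"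
    using spectrum_JNF[of M] by auto
  have "cmod c \<le> r" if "c \<in> spectrum_real M" for c
  proof -
    have "\<exists>v. v \<noteq> 0 \<and> cM M *v v = c *s v"
      using that unfolding spectrum_real_def cM_def by simp
    then obtain v where v: "v \<noteq> 0" "cM M *v v = c *s v" by blast
    have nv: "norm v > 0" using v(1) by simp
    have "cmod c ^ N \<le> K * r ^ N" for N
    proof -
      have "cmod c ^ N * norm v = norm (cM (mpow M N) *v v)"
        using cM_mpow_eig[OF v(2), of N] by (simp add: norm_smult_cvec norm_power)
      also have "\<dots> \<le> K * r ^ N * norm v"
        unfolding cM_def by (rule cM_norm_bound[OF b]) (use K r in simp)
      finally show ?thesis using nv by simp
    qed
    thus ?thesis by (rule pow_growth_le[OF norm_ge_zero r])
  qed
  thus ?thesis unfolding spectral_radius_def using fin ne by (simp add: Max_le_iff)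
qed

lemma spectral_radius_nonneg: "spectral_radius (M::real^'m::finite^'m) \<ge> 0"
proof -
  have fin: "finite (cmod ` spectrum_real M)" and ne: "cmod ` spectrum_real M \<noteq> {}"
    using spectrum_JNF[of M] by auto
  then obtain c where "c \<in> spectrum_real M" by auto
  hence "cmod c \<le> spectral_radius M" unfolding spectral_radius_def using fin by simp
  thus ?thesis by (meson norm_ge_zero order_trans)
qed


lemma spec_norm_bound: "norm ((M::real^'m::finite^'k::finite) *v x) \<le> spec_norm M * norm x"
  unfolding spec_norm_def by (rule onorm[OF matrix_vector_mul_bounded_linear])

lemma spec_norm_le: "b \<ge> 0 \<Longrightarrow> (\<And>x. norm ((M::real^'m::finite^'k::finite) *v x) \<le> b * norm x) \<Longrightarrow> spec_norm M \<le> b"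
  unfolding spec_norm_def by (rule onorm_bound)

lemma spec_norm_nonneg: "spec_norm (M::real^'m::finite^'k::finite) \<ge> 0"
  unfolding spec_norm_def by (rule onorm_pos_le[OF matrix_vector_mul_bounded_linear])

lemma spec_norm_mult: "spec_norm ((X::real^'m::finite^'m) ** Y) \<le> spec_norm X * spec_norm Y"
proof (rule spec_norm_le)
  show "0 \<le> spec_norm X * spec_norm Y" by (simp add: spec_norm_nonneg)
  fix x
  have "norm ((X ** Y) *v x) = norm (X *v (Y *v x))" by (simp add: matrix_vector_mul_assoc)
  also have "\<dots> \<le> spec_norm X * norm (Y *v x)" by (rule spec_norm_bound)
  also have "\<dots> \<le> spec_norm X * (spec_norm Y * norm x)"
    by (intro mult_left_mono spec_norm_bound spec_norm_nonneg)
  finally show "norm ((X ** Y) *v x) \<le> spec_norm X * spec_norm Y * norm x" by (simp add: mult.assoc)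
qed

lemma word_prod_Nil[simp]: "word_prod A [] = mat 1" by (simp add: word_prod_def)
lemma word_prod_Cons[simp]: "word_prod A (i # w) = A i ** word_prod A w" by (simp add: word_prod_def)

lemma word_prod_append: "word_prod A (w @ v) = word_prod A w ** word_prod A v"
  by (induction w) (auto simp: matrix_mul_assoc)

lemma word_prod_unit: "word_prod (\<lambda>_::unit. M) w = mpow M (length w)"
  by (induction w) auto

lemma pert_words:
  fixes M G :: "'i \<Rightarrow> real^'n::finite^'n"
  assumes hM: "\<And>w y. norm (word_prod M w *v y) \<le> \<kappa> * \<xi> ^ length w * norm y"
    and hE: "\<And>i y. norm ((G i - M i) *v y) \<le> e * norm y"
    and k0: "\<kappa> \<ge> 0" and x0: "\<xi> \<ge> 0" and e0: "e \<ge> 0"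
  shows "norm (word_prod G u *v y) \<le> \<kappa> * (\<xi> + \<kappa> * e) ^ length u * norm y"
proof -
  have gen: "norm (word_prod M w *v (word_prod G u *v y)) \<le> \<kappa> * \<xi> ^ length w * (\<xi> + \<kappa> * e) ^ length u * norm y" for w
  proof (induction u arbitrary: w)
    case Nil
    then show ?case using hM[of w y] by simp
  next
    case (Cons i u)
    define z where "z = word_prod G u *v y"
    have dec: "word_prod M w *v (word_prod G (i # u) *v y) = word_prod M (w @ [i]) *v z + word_prod M w *v ((G i - M i) *v z)"
    proof -
      have "G i *v z = M i *v z + (G i - M i) *v z" by (simp add: matrix_vector_mult_diff_rdistrib)
      thus ?thesis
        by (simp add: z_def word_prod_append matrix_vector_mul_assoc[symmetric] matrix_vector_right_distrib)
    qed
    have b1: "norm (word_prod M (w @ [i]) *v z) \<le> \<kappa> * \<xi> ^ length w * \<xi> * (\<xi> + \<kappa> * e) ^ length u * norm y"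
      using Cons.IH[of "w @ [i]"] unfolding z_def by (simp add: mult.assoc mult.left_commute)
    have zb: "norm z \<le> \<kappa> * (\<xi> + \<kappa> * e) ^ length u * norm y"
      using Cons.IH[of "[]"] unfolding z_def by simp
    have b2: "norm (word_prod M w *v ((G i - M i) *v z)) \<le> \<kappa> * \<xi> ^ length w * (e * norm z)"
    proof -
      have "norm (word_prod M w *v ((G i - M i) *v z)) \<le> \<kappa> * \<xi> ^ length w * norm ((G i - M i) *v z)"
        by (rule hM)
      also have "\<dots> \<le> \<kappa> * \<xi> ^ length w * (e * norm z)"
        by (intro mult_left_mono hE) (use k0 x0 in auto)
      finally show ?thesis .
    qed
    have b3: "\<kappa> * \<xi> ^ length w * (e * norm z) \<le> \<kappa> * \<xi> ^ length w * (e * (\<kappa> * (\<xi> + \<kappa> * e) ^ length u * norm y))"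
      by (intro mult_left_mono zb) (use k0 x0 e0 in auto)
    have "norm (word_prod M w *v (word_prod G (i # u) *v y)) \<le>
        \<kappa> * \<xi> ^ length w * \<xi> * (\<xi> + \<kappa> * e) ^ length u * norm y
        + \<kappa> * \<xi> ^ length w * (e * (\<kappa> * (\<xi> + \<kappa> * e) ^ length u * norm y))"
      unfolding dec using norm_triangle_le[OF add_mono[OF b1 order_trans[OF b2 b3]]] by simp
    also have "\<dots> = \<kappa> * \<xi> ^ length w * (\<xi> + \<kappa> * e) ^ length (i # u) * norm y"
      by (simp add: algebra_simps)
    finally show ?case .
  qed
  show ?thesis using gen[of "[]"] by simp
qed

lemma pert_pow:
  fixes M G :: "real^'n::finite^'n"
  assumes hM: "\<And>k y. norm (mpow M k *v y) \<le> \<tau> * \<rho> ^ k * norm y"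
    and hE: "\<And>y. norm ((G - M) *v y) \<le> e * norm y"
    and "\<tau> \<ge> 0" "\<rho> \<ge> 0" "e \<ge> 0"
  shows "norm (mpow G k *v y) \<le> \<tau> * (\<rho> + \<tau> * e) ^ k * norm y"
proof -
  have "norm (word_prod (\<lambda>_::unit. G) (replicate k ()) *v y) \<le> \<tau> * (\<rho> + \<tau> * e) ^ length (replicate k ()) * norm y"
  proof (rule pert_words[where M="\<lambda>_. M"])
    show "norm (word_prod (\<lambda>_. M) w *v y) \<le> \<tau> * \<rho> ^ length w * norm y" for w :: "unit list" and y
      using hM by (simp add: word_prod_unit)
    show "norm (((\<lambda>_. G) i - (\<lambda>_. M) i) *v y) \<le> e * norm y" for i y using hE by simp
  qed (simp_all add: \<open>\<tau> \<ge> 0\<close> \<open>\<rho> \<ge> 0\<close> \<open>e \<ge> 0\<close>)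
  thus ?thesis by (simp add: word_prod_unit)
qed

lemma sup_bound:
  fixes f :: "nat \<Rightarrow> real"
  assumes f0: "\<And>k. f k \<ge> 0" and r0: "\<rho> \<ge> 0" and C: "\<And>k. f k \<le> C * \<rho> ^ k"
  shows "f k \<le> (SUP k. f k / \<rho> ^ k) * \<rho> ^ k" "(SUP k. f k / \<rho> ^ k) \<ge> 0"
proof -
  have bnd: "f k / \<rho> ^ k \<le> max C 0" for k
  proof (cases "\<rho> ^ k = 0")
    case True thus ?thesis by (simp only: div_by_0)
  next
    case False
    have p: "\<rho> ^ k > 0" using False zero_le_power[OF r0, of k] by linarith
    have "f k / \<rho> ^ k \<le> C" unfolding pos_divide_le_eq[OF p] using C[of k] by (simp add: mult.commute)
    thus ?thesis by linarith
  qed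
  have bdd: "bdd_above (range (\<lambda>k. f k / \<rho> ^ k))"
    unfolding bdd_above_def using bnd by blast
  have le: "f k / \<rho> ^ k \<le> (SUP k. f k / \<rho> ^ k)" for k
    by (rule cSUP_upper[OF UNIV_I bdd])
  show "f k \<le> (SUP k. f k / \<rho> ^ k) * \<rho> ^ k"
  proof (cases "\<rho> ^ k = 0")
    case True
    have "f k \<le> 0" using C[of k] True by simp
    thus ?thesis using True by (metis mult_zero_right)
  next
    case False
    have p: "\<rho> ^ k > 0" using False zero_le_power[OF r0, of k] by linarith
    show ?thesis using le[of k] unfolding pos_divide_le_eq[OF p] .
  qed
  have "f 0 / \<rho> ^ 0 \<ge> 0" using f0[of 0] by simp
  thus "(SUP k. f k / \<rho> ^ k) \<ge> 0" using le[of 0] by linarith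
qed


lemma submult_iter:
  fixes a :: "nat \<Rightarrow> real"
  assumes nn: "\<And>k. a k \<ge> 0" and sub: "\<And>m n. a (m + n) \<le> a m * a n"
  shows "a (q * m + r) \<le> a m ^ q * a r"
proof (induction q)
  case 0 then show ?case by simp
next
  case (Suc q)
  have "a (Suc q * m + r) = a (m + (q * m + r))" by (simp add: add.assoc)
  also have "\<dots> \<le> a m * a (q * m + r)" by (rule sub)
  also have "\<dots> \<le> a m * (a m ^ q * a r)" by (rule mult_left_mono[OF Suc nn])
  finally show ?case by (simp add: mult.assoc)
qed

lemma fekete_conv:
  fixes a :: "nat \<Rightarrow> real"
  assumes nn: "\<And>k. a k \<ge> 0" and sub: "\<And>m n. a (m + n) \<le> a m * a n"
  shows "convergent (\<lambda>k. root k (a k))"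
proof -
  define b where "b k = root k (a k)" for k
  define L where "L = Inf (b ` {1..})"
  have bnn: "b k \<ge> 0" for k unfolding b_def by (rule real_root_ge_zero[OF nn])
  have bdd: "bdd_below (b ` {1..})" unfolding bdd_below_def using bnn by blast
  have ne: "b ` {1..} \<noteq> {}" by auto
  have L_le: "L \<le> b k" if "k \<ge> 1" for k unfolding L_def by (rule cInf_lower[OF _ bdd]) (use that in auto)
  have L0: "L \<ge> 0" unfolding L_def by (rule cInf_greatest[OF ne]) (use bnn in auto)
  have "b \<longlonglongrightarrow> L"
  proof (rule LIMSEQ_I)
    fix \<epsilon> :: real assume ep: "\<epsilon> > 0"
    have "Inf (b ` {1..}) < L + \<epsilon> / 2" unfolding L_def using ep by simp
    then obtain m where m: "m \<ge> 1" "b m < L + \<epsilon> / 2"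
      unfolding cInf_less_iff[OF ne bdd] by auto
    show "\<exists>N. \<forall>k\<ge>N. norm (b k - L) < \<epsilon>"
    proof (cases "a m = 0")
      case True
      have bz: "b k = 0" if "k \<ge> m" for k
      proof -
        have "a k = a (m + (k - m))" using that by simp
        also have "\<dots> \<le> a m * a (k - m)" by (rule sub)
        finally have "a k = 0" using True nn[of k] by simp
        thus ?thesis unfolding b_def by simp
      qed
      have "L = 0" using L_le[OF m(1)] bz[of m] L0 by simp
      thus ?thesis using bz ep by (intro exI[of _ m]) auto
    next
      case False
      hence am: "a m > 0" using nn[of m] by simp
      define c where "c = b m"
      have mp: "m > 0" using m(1) by simp
      have cp: "c > 0" unfolding c_def b_def using real_root_gt_zero[OF mp am] .
      have cm: "c ^ m = a m" unfolding c_def b_def using mp nn[of m] by simp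
      define D where "D = 1 + (\<Sum>r<2 * m. a r / c ^ r)"
      have Dge: "a r / c ^ r \<le> D - 1" if "r < 2 * m" for r
      proof -
        have "a r / c ^ r \<le> (\<Sum>r<2 * m. a r / c ^ r)"
          by (rule member_le_sum) (use that nn cp in auto)
        thus ?thesis unfolding D_def by simp
      qed
      have Dp: "D > 0"
      proof -
        have "(\<Sum>r<2 * m. a r / c ^ r) \<ge> 0" by (rule sum_nonneg) (use nn cp in auto)
        thus ?thesis unfolding D_def by simp
      qed
      have key: "a k \<le> c ^ k * D" if "k \<ge> m" for k
      proof -
        define q where "q = k div m - 1"
        define r where "r = m + k mod m"
        have "k div m \<ge> 1" using that mp by (metis One_nat_def Suc_leI div_greater_zero_iff)
        hence kq: "k = q * m + r" unfolding q_def r_def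
          by (metis (no_types, lifting) add.assoc add.commute div_mult_mod_eq le_add_diff_inverse2 mult.commute mult_Suc_right plus_1_eq_Suc)
        have r2: "r < 2 * m" unfolding r_def using mp by simp
        have "a k \<le> a m ^ q * a r" using submult_iter[OF nn sub, of q m r] kq by simp
        also have "\<dots> = c ^ (m * q) * a r" using cm by (simp add: power_mult)
        also have "a r \<le> c ^ r * D"
        proof -
          have "a r / c ^ r \<le> D" using Dge[OF r2] by simp
          thus ?thesis using cp by (simp add: divide_le_eq mult.commute)
        qed
        hence "c ^ (m * q) * a r \<le> c ^ (m * q) * (c ^ r * D)"
          using cp by (intro mult_left_mono) auto
        also have "\<dots> = c ^ k * D" using kq by (simp add: power_add mult.commute mult.left_commute)
        finally show ?thesis .
      qed
      have bk: "b k \<le> c * root k D" if "k \<ge> m" for k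
      proof -
        have kp: "k > 0" using that mp by simp
        have "b k \<le> root k (c ^ k * D)" unfolding b_def by (rule real_root_le_mono[OF kp key[OF that]])
        also have "\<dots> = c * root k D" using kp cp by (simp add: real_root_mult real_root_power_cancel)
        finally show ?thesis .
      qed
      have "(\<lambda>k. c * root k D) \<longlonglongrightarrow> c * 1"
        by (intro tendsto_mult_left LIMSEQ_root_const Dp)
      hence "eventually (\<lambda>k. c * root k D < c + \<epsilon> / 2) sequentially"
        using ep by (intro order_tendstoD(2)) auto
      then obtain N1 where N1: "\<And>k. k \<ge> N1 \<Longrightarrow> c * root k D < c + \<epsilon> / 2"
        unfolding eventually_sequentially by auto
      show ?thesis
      proof (intro exI[of _ "max m N1"] allI impI)
        fix k assume k: "max m N1 \<le> k"
        have "L \<le> b k" using L_le[of k] k m(1) by simp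
        moreover have "b k < L + \<epsilon>" using bk[of k] N1[of k] k m(2) unfolding c_def by simp
        ultimately show "norm (b k - L) < \<epsilon>" by simp
      qed
    qed
  qed
  thus ?thesis unfolding convergent_def b_def by blast
qed

lemma fin_words: "finite {w::'m::finite list. length w = k}"
  using finite_lists_length_eq[of "UNIV::'m set" k] by simp

lemma words_ne: "{w::'m list. length w = k} \<noteq> {}"
  by (metis (mono_tags, lifting) empty_iff length_replicate mem_Collect_eq)

lemma mpn_ge: "length w = k \<Longrightarrow> spec_norm (word_prod (A::'m::finite \<Rightarrow> real^'n::finite^'n) w) \<le> max_prod_norm A k"
  unfolding max_prod_norm_def by (rule Max_ge) (auto simp: fin_words)

lemma mpn_le: "(\<And>w. length w = k \<Longrightarrow> spec_norm (word_prod (A::'m::finite \<Rightarrow> real^'n::finite^'n) w) \<le> B) \<Longrightarrow> max_prod_norm A k \<le> B"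
  unfolding max_prod_norm_def using fin_words[of k] words_ne[of k]
  by (subst Max_le_iff) auto

lemma mpn_nonneg: "max_prod_norm (A::'m::finite \<Rightarrow> real^'n::finite^'n) k \<ge> 0"
  using mpn_ge[of "replicate k undefined" k A] spec_norm_nonneg[of "word_prod A (replicate k undefined)"] by simp

lemma mpn_submult: "max_prod_norm (A::'m::finite \<Rightarrow> real^'n::finite^'n) (m + n) \<le> max_prod_norm A m * max_prod_norm A n"
proof (rule mpn_le)
  fix w :: "'m list" assume w: "length w = m + n"
  have "word_prod A w = word_prod A (take m w) ** word_prod A (drop m w)"
    by (metis append_take_drop_id word_prod_append)
  hence "spec_norm (word_prod A w) \<le> spec_norm (word_prod A (take m w)) * spec_norm (word_prod A (drop m w))"
    using spec_norm_mult by metis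
  also have "\<dots> \<le> max_prod_norm A m * max_prod_norm A n"
    by (intro mult_mono mpn_ge spec_norm_nonneg mpn_nonneg) (use w in auto)
  finally show "spec_norm (word_prod A w) \<le> max_prod_norm A m * max_prod_norm A n" .
qed

lemma jsr_lim: "(\<lambda>k. root k (max_prod_norm (A::'m::finite \<Rightarrow> real^'n::finite^'n) k)) \<longlonglongrightarrow> jsr A"
proof -
  have "convergent (\<lambda>k. root k (max_prod_norm A k))"
    by (rule fekete_conv[OF mpn_nonneg mpn_submult])
  thus ?thesis unfolding jsr_def by (simp add: convergent_LIMSEQ_iff)
qed

lemma jsr_nonneg: "jsr (A::'m::finite \<Rightarrow> real^'n::finite^'n) \<ge> 0"
  by (rule LIMSEQ_le_const[OF jsr_lim]) (auto intro: real_root_ge_zero mpn_nonneg)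

lemma jsr_le:
  fixes A :: "'m::finite \<Rightarrow> real^'n::finite^'n"
  assumes b: "\<And>k. max_prod_norm A k \<le> K * r ^ k" and r: "r \<ge> 0" and K: "K \<ge> 0"
  shows "jsr A \<le> r"
proof -
  have "(\<lambda>k. root k (K + 1) * r) \<longlonglongrightarrow> 1 * r"
    by (intro tendsto_mult_right LIMSEQ_root_const) (use K in simp)
  moreover have "\<forall>k\<ge>1. root k (max_prod_norm A k) \<le> root k (K + 1) * r"
  proof (intro allI impI)
    fix k :: nat assume k: "k \<ge> 1"
    have "max_prod_norm A k \<le> (K + 1) * r ^ k"
      using b[of k] zero_le_power[OF r, of k] by (simp add: algebra_simps)
    hence "root k (max_prod_norm A k) \<le> root k ((K + 1) * r ^ k)"
      by (rule real_root_le_mono[rotated]) (use k in simp)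
    also have "\<dots> = root k (K + 1) * r" using k r by (simp add: real_root_mult real_root_power_cancel)
    finally show "root k (max_prod_norm A k) \<le> root k (K + 1) * r" .
  qed
  ultimately show ?thesis using LIMSEQ_le[OF jsr_lim] by fastforce
qed


lemma normsq_real: "(norm (x::real^'n))\<^sup>2 = (\<Sum>i\<in>UNIV. (x $ i)\<^sup>2)"
  unfolding normsq_vec by simp

lemma sum_pair: "(\<Sum>p\<in>(UNIV::('a::finite \<times> 'b::finite) set). f p) = (\<Sum>a\<in>UNIV. \<Sum>b\<in>UNIV. f (a, b))"
  by (subst UNIV_Times_UNIV[symmetric]) (simp add: sum.cartesian_product)

definition blk :: "real^('s::finite \<times> 'm::finite) \<Rightarrow> 's \<Rightarrow> real^'m" where
  "blk x j = (\<chi> b. x $ (j, b))"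

lemma normsq_blk: "(norm (x::real^('s::finite \<times> 'm::finite)))\<^sup>2 = (\<Sum>j\<in>UNIV. (norm (blk x j))\<^sup>2)"
  unfolding normsq_real sum_pair blk_def by simp

lemma frob_norm_eq: "frob_norm (M::real^'m::finite^'k::finite) = norm M"
proof -
  have "(norm M)\<^sup>2 = (\<Sum>i\<in>UNIV. \<Sum>j\<in>UNIV. (M $ i $ j)\<^sup>2)"
    unfolding normsq_vec by (simp add: normsq_real)
  thus ?thesis unfolding frob_norm_def by (metis norm_ge_zero real_sqrt_unique)
qed

lemma frob_bound: "norm ((M::real^'m::finite^'k::finite) *v x) \<le> norm M * norm x"
proof -
  have "(norm (M *v x))\<^sup>2 = (\<Sum>i\<in>UNIV. (inner (M $ i) x)\<^sup>2)"
    unfolding normsq_real matrix_vector_mul_component ..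
  also have "\<dots> \<le> (\<Sum>i\<in>UNIV. (norm (M $ i) * norm x)\<^sup>2)"
    by (intro sum_mono) (metis Cauchy_Schwarz_ineq2 abs_ge_zero power2_abs power_mono)
  also have "\<dots> = (norm M * norm x)\<^sup>2"
    unfolding power_mult_distrib normsq_vec[of M] sum_distrib_right ..
  finally show ?thesis by (simp add: power2_le_iff_abs_le)
qed

lemma sum_matrix_vector: "(\<Sum>i\<in>S. (A i :: real^'m::finite^'k::finite)) *v x = (\<Sum>i\<in>S. A i *v x)"
  by (simp add: Finite_Cartesian_Product.vec_eq_iff matrix_vector_mult_def sum_distrib_right sum_component;
      intro allI sum.swap)

lemma kron_comp:
  fixes X Y :: "real^'n::finite^'n"
  shows "(kron X Y *v z) $ (a1, a2) =
    (X *v (\<chi> b1. (Y *v (\<chi> b2. z $ (b1, b2))) $ a2)) $ a1"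
  by (simp add: kron_def matrix_vector_mult_def sum_pair sum_distrib_left mult.assoc)

lemma kron_bound:
  fixes X Y :: "real^'n::finite^'n"
  assumes bX: "\<And>y. norm (X *v y) \<le> a * norm y" and bY: "\<And>y. norm (Y *v y) \<le> b * norm y"
    and a: "a \<ge> 0" and b: "b \<ge> 0"
  shows "norm (kron X Y *v z) \<le> a * b * norm z"
proof -
  define W where "W b1 = Y *v (\<chi> b2. z $ (b1, b2))" for b1
  define col where "col a2 = (\<chi> b1. W b1 $ a2)" for a2
  have "(norm (kron X Y *v z))\<^sup>2 = (\<Sum>a1\<in>UNIV. \<Sum>a2\<in>UNIV. ((X *v col a2) $ a1)\<^sup>2)"
    unfolding normsq_real sum_pair kron_comp col_def W_def ..
  also have "\<dots> = (\<Sum>a2\<in>UNIV. (norm (X *v col a2))\<^sup>2)"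
    unfolding normsq_real by (rule sum.swap)
  also have "\<dots> \<le> (\<Sum>a2\<in>UNIV. (a * norm (col a2))\<^sup>2)"
    by (intro sum_mono power_mono bX) auto
  also have "\<dots> = a\<^sup>2 * (\<Sum>a2\<in>UNIV. \<Sum>b1\<in>UNIV. (W b1 $ a2)\<^sup>2)"
    unfolding power_mult_distrib sum_distrib_left normsq_real col_def by simp
  also have "\<dots> \<le> a\<^sup>2 * (b\<^sup>2 * (norm z)\<^sup>2)"
  proof (rule mult_left_mono)
    have "(\<Sum>a2\<in>UNIV. \<Sum>b1\<in>UNIV. (W b1 $ a2)\<^sup>2) = (\<Sum>b1\<in>UNIV. (norm (W b1))\<^sup>2)"
      unfolding normsq_real by (rule sum.swap)
    also have "\<dots> \<le> (\<Sum>b1\<in>UNIV. (b * norm (\<chi> b2. z $ (b1, b2)))\<^sup>2)"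
      unfolding W_def by (intro sum_mono power_mono bY) auto
    also have "\<dots> = b\<^sup>2 * (norm z)\<^sup>2"
      unfolding power_mult_distrib sum_distrib_left[symmetric] normsq_real[of z] sum_pair
      by (simp add: normsq_real)
    finally show "(\<Sum>a2\<in>UNIV. \<Sum>b1\<in>UNIV. (W b1 $ a2)\<^sup>2) \<le> b\<^sup>2 * (norm z)\<^sup>2" .
  qed simp
  finally have "(norm (kron X Y *v z))\<^sup>2 \<le> (a * b * norm z)\<^sup>2"
    by (simp add: power_mult_distrib mult.assoc)
  thus ?thesis using a b by (simp add: power2_le_iff_abs_le)
qed

lemma kron_diff: "kron X X - kron Y Y = kron (X - Y) X + kron Y (X - Y)"
  by (simp add: kron_def Finite_Cartesian_Product.vec_eq_iff algebra_simps)

definition BM :: "('s::finite \<Rightarrow> 's \<Rightarrow> real) \<Rightarrow> ('s \<Rightarrow> real^'m::finite^'m) \<Rightarrow> real^('s \<times> 'm)^('s \<times> 'm)" where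
  "BM W K = (\<chi> x y. W (fst y) (fst x) * K (fst y) $ snd x $ snd y)"

lemma aug_BM: "aug T A = BM T (\<lambda>j. kron (A j) (A j))"
  unfolding aug_def BM_def ..

lemma BM_blk: "blk (BM W K *v x) i = (\<Sum>j\<in>UNIV. W j i *\<^sub>R (K j *v blk x j))"
  by (simp add: BM_def blk_def Finite_Cartesian_Product.vec_eq_iff matrix_vector_mult_def sum_pair
      sum_distrib_left mult.assoc sum_component)

lemma weighted_CS:
  fixes w a :: "'j \<Rightarrow> real"
  assumes "\<And>j. w j \<ge> 0"
  shows "(\<Sum>j\<in>S. w j * a j)\<^sup>2 \<le> (\<Sum>j\<in>S. w j) * (\<Sum>j\<in>S. w j * (a j)\<^sup>2)"
proof -
  have "(\<Sum>j\<in>S. sqrt (w j) * (sqrt (w j) * a j))\<^sup>2 \<le> (\<Sum>j\<in>S. (sqrt (w j))\<^sup>2) * (\<Sum>j\<in>S. (sqrt (w j) * a j)\<^sup>2)"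
    by (rule Cauchy_Schwarz_ineq_sum)
  moreover have "sqrt (w j) * (sqrt (w j) * a j) = w j * a j" for j
    using assms[of j] by (simp add: mult.assoc[symmetric])
  moreover have "(sqrt (w j))\<^sup>2 = w j" for j using assms[of j] by simp
  moreover have "(sqrt (w j) * a j)\<^sup>2 = w j * (a j)\<^sup>2" for j using assms[of j] by (simp add: power_mult_distrib)
  ultimately show ?thesis by simp
qed

lemma BM_bound1:
  fixes W :: "'s::finite \<Rightarrow> 's \<Rightarrow> real" and K :: "'s \<Rightarrow> real^'m::finite^'m"
  assumes W0: "\<And>i j. W j i \<ge> 0" and W1: "\<And>i j. W j i \<le> 1" and Ws: "\<And>j. (\<Sum>i\<in>UNIV. W j i) = 1"
    and bK: "\<And>j y. norm (K j *v y) \<le> d * norm y" and d: "d \<ge> 0"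
  shows "norm (BM W K *v x) \<le> sqrt (real CARD('s)) * d * norm x"
proof -
  define a where "a j = norm (blk x j)" for j
  have vi: "norm (blk (BM W K *v x) i) \<le> d * (\<Sum>j\<in>UNIV. W j i * a j)" for i
  proof -
    have "norm (blk (BM W K *v x) i) \<le> (\<Sum>j\<in>UNIV. norm (W j i *\<^sub>R (K j *v blk x j)))"
      unfolding BM_blk by (rule norm_sum)
    also have "\<dots> \<le> (\<Sum>j\<in>UNIV. W j i * (d * a j))"
      by (intro sum_mono) (use W0 in \<open>auto simp: a_def intro: mult_left_mono bK\<close>)
    finally show ?thesis by (simp add: sum_distrib_left mult.left_commute)
  qed
  have "(norm (BM W K *v x))\<^sup>2 = (\<Sum>i\<in>UNIV. (norm (blk (BM W K *v x) i))\<^sup>2)" by (rule normsq_blk)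
  also have "\<dots> \<le> (\<Sum>i\<in>UNIV. (d * (\<Sum>j\<in>UNIV. W j i * a j))\<^sup>2)"
    by (intro sum_mono power_mono vi) auto
  also have "\<dots> \<le> (\<Sum>i\<in>UNIV. d\<^sup>2 * (real CARD('s) * (\<Sum>j\<in>UNIV. W j i * (a j)\<^sup>2)))"
  proof (intro sum_mono)
    fix i
    have "(\<Sum>j\<in>UNIV. W j i * a j)\<^sup>2 \<le> (\<Sum>j\<in>UNIV. W j i) * (\<Sum>j\<in>UNIV. W j i * (a j)\<^sup>2)"
      by (rule weighted_CS) (rule W0)
    also have "\<dots> \<le> real CARD('s) * (\<Sum>j\<in>UNIV. W j i * (a j)\<^sup>2)"
    proof (rule mult_right_mono)
      have "(\<Sum>j\<in>UNIV. W j i) \<le> (\<Sum>j\<in>(UNIV::'s set). 1)" by (intro sum_mono W1)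
      thus "(\<Sum>j\<in>UNIV. W j i) \<le> real CARD('s)" by simp
      show "0 \<le> (\<Sum>j\<in>UNIV. W j i * (a j)\<^sup>2)" by (intro sum_nonneg) (simp add: W0)
    qed
    finally show "(d * (\<Sum>j\<in>UNIV. W j i * a j))\<^sup>2 \<le> d\<^sup>2 * (real CARD('s) * (\<Sum>j\<in>UNIV. W j i * (a j)\<^sup>2))"
      unfolding power_mult_distrib by (intro mult_left_mono) auto
  qed
  also have "\<dots> = d\<^sup>2 * real CARD('s) * (\<Sum>i\<in>UNIV. \<Sum>j\<in>UNIV. W j i * (a j)\<^sup>2)"
    by (simp add: sum_distrib_left mult.assoc)
  also have "(\<Sum>i\<in>UNIV. \<Sum>j\<in>UNIV. W j i * (a j)\<^sup>2) = (\<Sum>j\<in>UNIV. \<Sum>i\<in>UNIV. W j i * (a j)\<^sup>2)"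
    by (rule sum.swap)
  also have "\<dots> = (\<Sum>j\<in>UNIV. (a j)\<^sup>2)"
    by (simp add: sum_distrib_right[symmetric] Ws)
  also have "d\<^sup>2 * real CARD('s) * (\<Sum>j\<in>UNIV. (a j)\<^sup>2) = (sqrt (real CARD('s)) * d * norm x)\<^sup>2"
    by (simp add: normsq_blk a_def power_mult_distrib)
  finally show ?thesis using d by (simp add: power2_le_iff_abs_le)
qed

lemma BM_bound2:
  fixes W :: "'s::finite \<Rightarrow> 's \<Rightarrow> real" and K :: "'s \<Rightarrow> real^'m::finite^'m"
  assumes bK: "\<And>j y. norm (K j *v y) \<le> c * norm y" and c: "c \<ge> 0"
  shows "norm (BM W K *v x) \<le> sqrt (\<Sum>i\<in>UNIV. \<Sum>j\<in>UNIV. (W i j)\<^sup>2) * c * norm x"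
proof -
  define a where "a j = norm (blk x j)" for j
  have vi: "norm (blk (BM W K *v x) i) \<le> c * (\<Sum>j\<in>UNIV. \<bar>W j i\<bar> * a j)" for i
  proof -
    have "norm (blk (BM W K *v x) i) \<le> (\<Sum>j\<in>UNIV. norm (W j i *\<^sub>R (K j *v blk x j)))"
      unfolding BM_blk by (rule norm_sum)
    also have "\<dots> \<le> (\<Sum>j\<in>UNIV. \<bar>W j i\<bar> * (c * a j))"
      by (intro sum_mono) (auto simp: a_def intro: mult_left_mono bK)
    finally show ?thesis by (simp add: sum_distrib_left mult.left_commute)
  qed
  have "(norm (BM W K *v x))\<^sup>2 = (\<Sum>i\<in>UNIV. (norm (blk (BM W K *v x) i))\<^sup>2)" by (rule normsq_blk)
  also have "\<dots> \<le> (\<Sum>i\<in>UNIV. (c * (\<Sum>j\<in>UNIV. \<bar>W j i\<bar> * a j))\<^sup>2)"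
    by (intro sum_mono power_mono vi) auto
  also have "\<dots> \<le> (\<Sum>i\<in>UNIV. c\<^sup>2 * ((\<Sum>j\<in>UNIV. (W j i)\<^sup>2) * (\<Sum>j\<in>UNIV. (a j)\<^sup>2)))"
  proof (intro sum_mono)
    fix i
    have "(\<Sum>j\<in>UNIV. \<bar>W j i\<bar> * a j)\<^sup>2 \<le> (\<Sum>j\<in>UNIV. \<bar>W j i\<bar>\<^sup>2) * (\<Sum>j\<in>UNIV. (a j)\<^sup>2)"
      by (rule Cauchy_Schwarz_ineq_sum)
    thus "(c * (\<Sum>j\<in>UNIV. \<bar>W j i\<bar> * a j))\<^sup>2 \<le> c\<^sup>2 * ((\<Sum>j\<in>UNIV. (W j i)\<^sup>2) * (\<Sum>j\<in>UNIV. (a j)\<^sup>2))"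
      unfolding power_mult_distrib by (intro mult_left_mono) auto
  qed
  also have "\<dots> = c\<^sup>2 * (\<Sum>i\<in>UNIV. \<Sum>j\<in>UNIV. (W j i)\<^sup>2) * (\<Sum>j\<in>UNIV. (a j)\<^sup>2)"
    by (simp only: sum_distrib_left[symmetric] sum_distrib_right[symmetric] mult.assoc)
  also have "(\<Sum>j\<in>UNIV. (a j)\<^sup>2) = (norm x)\<^sup>2" by (simp add: normsq_blk a_def)
  also have "(\<Sum>i\<in>UNIV. \<Sum>j\<in>UNIV. (W j i)\<^sup>2) = (\<Sum>i\<in>UNIV. \<Sum>j\<in>UNIV. (W i j)\<^sup>2)"
    by (rule sum.swap)
  also have "c\<^sup>2 * (\<Sum>i\<in>UNIV. \<Sum>j\<in>UNIV. (W i j)\<^sup>2) * (norm x)\<^sup>2 = (sqrt (\<Sum>i\<in>UNIV. \<Sum>j\<in>UNIV. (W i j)\<^sup>2) * c * norm x)\<^sup>2"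
    by (simp add: power_mult_distrib sum_nonneg)
  finally show ?thesis using c by (simp add: power2_le_iff_abs_le sum_nonneg)
qed


lemma frob_nonneg: "frob_norm M \<ge> 0"
  unfolding frob_norm_def by (simp add: sum_nonneg)

lemma sum_cluster:
  fixes cl :: "'s::finite \<Rightarrow> 'r::finite"
  shows "(\<Sum>k\<in>UNIV. \<Sum>j\<in>cluster cl k. f j) = (\<Sum>j\<in>UNIV. f j)"
proof -
  have "(\<Sum>k\<in>(UNIV::'r::finite set). sum f {x. x \<in> UNIV \<and> cl x = k}) = sum f UNIV"
    by (rule sum.group) auto
  thus ?thesis unfolding cluster_def by simp
qed

lemma red_diff:
  fixes A :: "'s::finite \<Rightarrow> real^'n::finite^'n" and cl :: "'s \<Rightarrow> 'r::finite"
  assumes epsA: "(\<Sum>k\<in>UNIV. \<Sum>i\<in>cluster cl k. \<Sum>i'\<in>cluster cl k. frob_norm (A i - A i')) \<le> \<epsilon>A"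
  shows "norm (red_mat A cl (cl j) - A j) \<le> \<epsilon>A"
proof -
  define \<Omega> where "\<Omega> = cluster cl (cl j)"
  have jO: "j \<in> \<Omega>" unfolding \<Omega>_def cluster_def by simp
  have fin: "finite \<Omega>" by simp
  define c where "c = card \<Omega>"
  have c1: "c \<ge> 1" unfolding c_def using jO fin by (metis One_nat_def Suc_leI card_gt_0_iff empty_iff)
  have eq: "red_mat A cl (cl j) - A j = (1 / real c) *\<^sub>R (\<Sum>i\<in>\<Omega>. (A i - A j))"
  proof -
    have "(\<Sum>i\<in>\<Omega>. (A i - A j)) = (\<Sum>i\<in>\<Omega>. A i) - real c *\<^sub>R A j"
      unfolding sum_subtractf c_def sum_constant_scaleR ..
    hence "(1 / real c) *\<^sub>R (\<Sum>i\<in>\<Omega>. (A i - A j)) = (1 / real c) *\<^sub>R (\<Sum>i\<in>\<Omega>. A i) - A j"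
      using c1 by (simp add: scaleR_diff_right)
    thus ?thesis unfolding red_mat_def \<Omega>_def[symmetric] c_def[symmetric] by simp
  qed
  have "norm (red_mat A cl (cl j) - A j) \<le> (1 / real c) * (\<Sum>i\<in>\<Omega>. norm (A i - A j))"
    unfolding eq using norm_sum[of "\<lambda>i. A i - A j" \<Omega>] c1
    by (simp add: divide_right_mono)
  also have "\<dots> \<le> (\<Sum>i\<in>\<Omega>. norm (A i - A j))"
  proof -
    have "(\<Sum>i\<in>\<Omega>. norm (A i - A j)) \<ge> 0" by (simp add: sum_nonneg)
    moreover have "1 / real c \<le> 1" using c1 by simp
    ultimately show ?thesis using mult_right_mono[of "1 / real c" 1 "\<Sum>i\<in>\<Omega>. norm (A i - A j)"] by simp
  qed
  also have "\<dots> \<le> (\<Sum>i\<in>\<Omega>. \<Sum>i'\<in>\<Omega>. frob_norm (A i - A i'))"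
  proof (rule sum_mono)
    fix i assume "i \<in> \<Omega>"
    have "frob_norm (A i - A j) \<le> (\<Sum>i'\<in>\<Omega>. frob_norm (A i - A i'))"
      by (rule member_le_sum[OF jO]) (auto simp: frob_nonneg)
    thus "norm (A i - A j) \<le> (\<Sum>i'\<in>\<Omega>. frob_norm (A i - A i'))" by (simp add: frob_norm_eq)
  qed
  also have "\<dots> \<le> (\<Sum>k\<in>UNIV. \<Sum>i\<in>cluster cl k. \<Sum>i'\<in>cluster cl k. frob_norm (A i - A i'))"
    unfolding \<Omega>_def by (rule member_le_sum) (auto intro!: sum_nonneg simp: frob_nonneg)
  finally show ?thesis using epsA by simp
qed

lemma red_op:
  fixes A :: "'s::finite \<Rightarrow> real^'n::finite^'n" and cl :: "'s \<Rightarrow> 'r::finite"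
  shows "norm (red_mat A cl k *v x) \<le> Max ((\<lambda>i. spec_norm (A i)) ` UNIV) * norm x"
proof -
  define Ab where "Ab = Max ((\<lambda>i. spec_norm (A i)) ` UNIV)"
  have Ai: "norm (A i *v y) \<le> Ab * norm y" for i y
  proof -
    have "spec_norm (A i) \<le> Ab" unfolding Ab_def by (rule Max_ge) auto
    thus ?thesis using spec_norm_bound[of "A i" y] by (meson mult_right_mono norm_ge_zero order_trans)
  qed
  have Ab0: "Ab \<ge> 0" using Ai[of undefined 0] spec_norm_nonneg[of "A undefined"]
    unfolding Ab_def by (meson Max_ge UNIV_I finite finite_imageI image_eqI order_trans)
  define \<Omega> where "\<Omega> = cluster cl k"
  define c where "c = card \<Omega>"
  have "red_mat A cl k *v x = (1 / real c) *\<^sub>R (\<Sum>i\<in>\<Omega>. A i *v x)"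
    unfolding red_mat_def \<Omega>_def[symmetric] c_def[symmetric]
    by (simp add: scaleR_matrix_vector_assoc[symmetric] sum_matrix_vector)
  hence "norm (red_mat A cl k *v x) \<le> (1 / real c) * (\<Sum>i\<in>\<Omega>. norm (A i *v x))"
    using norm_sum[of "\<lambda>i. A i *v x" \<Omega>] by (simp add: divide_right_mono)
  also have "\<dots> \<le> (1 / real c) * (\<Sum>i\<in>\<Omega>. Ab * norm x)"
    by (intro mult_left_mono sum_mono Ai) auto
  also have "\<dots> = (1 / real c) * real c * (Ab * norm x)" unfolding c_def by simp
  also have "\<dots> \<le> Ab * norm x"
    using Ab0 by (cases "c = 0") auto
  finally show ?thesis unfolding Ab_def .
qed

lemma A_op:
  fixes A :: "'s::finite \<Rightarrow> real^'n::finite^'n"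
  shows "norm (A i *v y) \<le> Max ((\<lambda>i. spec_norm (A i)) ` UNIV) * norm y"
proof -
  have "spec_norm (A i) \<le> Max ((\<lambda>i. spec_norm (A i)) ` UNIV)" by (rule Max_ge) auto
  thus ?thesis using spec_norm_bound[of "A i" y] by (meson mult_right_mono norm_ge_zero order_trans)
qed

lemma Amax_nonneg: "Max ((\<lambda>i. spec_norm ((A::'s::finite \<Rightarrow> real^'n::finite^'n) i)) ` UNIV) \<ge> 0"
proof -
  have "spec_norm (A undefined) \<le> Max ((\<lambda>i. spec_norm (A i)) ` UNIV)" by (rule Max_ge) auto
  thus ?thesis using spec_norm_nonneg[of "A undefined"] by linarith
qed

lemma pert_aug:
  fixes A :: "'s::finite \<Rightarrow> real^'n::finite^'n" and cl :: "'s \<Rightarrow> 'r::finite"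
    and T Tbar :: "'s \<Rightarrow> 's \<Rightarrow> real"
  assumes epsA: "(\<Sum>k\<in>UNIV. \<Sum>i\<in>cluster cl k. \<Sum>i'\<in>cluster cl k. frob_norm (A i - A i')) \<le> \<epsilon>A"
    and Tbar_markov: "markov Tbar"
    and Tbar_frob: "frob_norm_fun (\<lambda>i j. Tbar i j - T i j) \<le> \<epsilon>T"
  shows "norm ((aug Tbar (\<lambda>i. red_mat A cl (cl i)) - aug T A) *v x) \<le>
     sqrt (real CARD('s)) * ((2 * Max ((\<lambda>i. spec_norm (A i)) ` UNIV) + \<epsilon>A) * \<epsilon>A
          + (Max ((\<lambda>i. spec_norm (A i)) ` UNIV))\<^sup>2 * \<epsilon>T) * norm x"
proof -
  define Ab where "Ab = Max ((\<lambda>i. spec_norm (A i)) ` UNIV)"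
  define R where "R = (\<lambda>i. red_mat A cl (cl i))"
  have Ab0: "Ab \<ge> 0" unfolding Ab_def by (rule Amax_nonneg)
  have eA0: "\<epsilon>A \<ge> 0" using epsA by (smt (verit) frob_nonneg sum_nonneg)
  have eT0: "\<epsilon>T \<ge> 0" using Tbar_frob unfolding frob_norm_fun_def by (smt (verit) real_sqrt_ge_zero sum_nonneg zero_le_power2)
  have T0: "Tbar j i \<ge> 0" for i j using Tbar_markov unfolding markov_def by auto
  have Ts: "(\<Sum>i\<in>UNIV. Tbar j i) = 1" for j using Tbar_markov unfolding markov_def by auto
  have T1: "Tbar j i \<le> 1" for i j
    using member_le_sum[of i UNIV "Tbar j"] T0 Ts[of j] by simp
  have split: "aug Tbar R - aug T A = BM Tbar (\<lambda>j. kron (R j) (R j) - kron (A j) (A j)) + BM (\<lambda>j i. Tbar j i - T j i) (\<lambda>j. kron (A j) (A j))"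
    unfolding aug_BM BM_def by (simp add: Finite_Cartesian_Product.vec_eq_iff algebra_simps)
  have RA: "norm ((R j - A j) *v y) \<le> \<epsilon>A * norm y" for j y
    using frob_bound[of "R j - A j" y] red_diff[OF epsA, of j] unfolding R_def
    by (meson mult_right_mono norm_ge_zero order_trans)
  have Rop: "norm (R j *v y) \<le> Ab * norm y" for j y unfolding R_def Ab_def by (rule red_op)
  have Aop: "norm (A j *v y) \<le> Ab * norm y" for j y unfolding Ab_def by (rule A_op)
  have K1: "norm ((kron (R j) (R j) - kron (A j) (A j)) *v y) \<le> (2 * Ab * \<epsilon>A) * norm y" for j y
  proof -
    have "norm ((kron (R j) (R j) - kron (A j) (A j)) *v y)
        \<le> norm (kron (R j - A j) (R j) *v y) + norm (kron (A j) (R j - A j) *v y)"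
      unfolding kron_diff matrix_vector_mult_add_rdistrib by (rule norm_triangle_ineq)
    also have "\<dots> \<le> \<epsilon>A * Ab * norm y + Ab * \<epsilon>A * norm y"
      by (intro add_mono kron_bound RA Rop Aop eA0 Ab0)
    finally show ?thesis by (simp add: algebra_simps)
  qed
  have B1: "norm (BM Tbar (\<lambda>j. kron (R j) (R j) - kron (A j) (A j)) *v x) \<le> sqrt (real CARD('s)) * (2 * Ab * \<epsilon>A) * norm x"
    by (rule BM_bound1[OF T0 T1 Ts K1]) (use Ab0 eA0 in simp)
  have K2: "norm (kron (A j) (A j) *v y) \<le> (Ab * Ab) * norm y" for j y
    by (intro kron_bound Aop Ab0)
  have B2: "norm (BM (\<lambda>j i. Tbar j i - T j i) (\<lambda>j. kron (A j) (A j)) *v x) \<le> \<epsilon>T * (Ab * Ab) * norm x"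
  proof -
    have "norm (BM (\<lambda>j i. Tbar j i - T j i) (\<lambda>j. kron (A j) (A j)) *v x)
        \<le> frob_norm_fun (\<lambda>i j. Tbar i j - T i j) * (Ab * Ab) * norm x"
      unfolding frob_norm_fun_def by (rule BM_bound2[OF K2]) (use Ab0 in simp)
    also have "\<dots> \<le> \<epsilon>T * (Ab * Ab) * norm x"
      by (intro mult_right_mono Tbar_frob) (use Ab0 in auto)
    finally show ?thesis .
  qed
  have "norm ((aug Tbar R - aug T A) *v x) \<le> sqrt (real CARD('s)) * (2 * Ab * \<epsilon>A) * norm x + \<epsilon>T * (Ab * Ab) * norm x"
    unfolding split matrix_vector_mult_add_rdistrib using norm_triangle_le[OF add_mono[OF B1 B2]] .
  also have "\<dots> = (sqrt (real CARD('s)) * (2 * Ab * \<epsilon>A) + \<epsilon>T * (Ab * Ab)) * norm x"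
    by (simp add: algebra_simps)
  also have "\<dots> \<le> sqrt (real CARD('s)) * ((2 * Ab + \<epsilon>A) * \<epsilon>A + Ab\<^sup>2 * \<epsilon>T) * norm x"
  proof (rule mult_right_mono[OF _ norm_ge_zero])
    have s1: "sqrt (real CARD('s)) \<ge> 1" by simp
    have "\<epsilon>T * (Ab * Ab) \<le> sqrt (real CARD('s)) * (Ab\<^sup>2 * \<epsilon>T)"
      using mult_right_mono[OF s1, of "Ab\<^sup>2 * \<epsilon>T"] eT0 by (simp add: power2_eq_square mult.commute)
    moreover have "0 \<le> sqrt (real CARD('s)) * (\<epsilon>A * \<epsilon>A)" using eA0 by simp
    ultimately show "sqrt (real CARD('s)) * (2 * Ab * \<epsilon>A) + \<epsilon>T * (Ab * Ab)
        \<le> sqrt (real CARD('s)) * ((2 * Ab + \<epsilon>A) * \<epsilon>A + Ab\<^sup>2 * \<epsilon>T)"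
      by (simp add: algebra_simps)
  qed
  finally show ?thesis unfolding R_def Ab_def .
qed


definition Pagg :: "('s::finite \<Rightarrow> 'r::finite) \<Rightarrow> real^('s \<times> 'm::finite) \<Rightarrow> real^('r \<times> 'm)" where
  "Pagg cl x = (\<chi> p. \<Sum>i\<in>cluster cl (fst p). x $ (i, snd p))"

definition Llift :: "('s::finite \<Rightarrow> 'r::finite) \<Rightarrow> real^('r \<times> 'm::finite) \<Rightarrow> real^('s \<times> 'm)" where
  "Llift cl y = (\<chi> p. y $ (cl (fst p), snd p) / real (card (cluster cl (cl (fst p)))))"

lemma Pagg_linear: "linear (Pagg cl)"
  by (intro linearI) (simp_all add: Pagg_def Finite_Cartesian_Product.vec_eq_iff sum.distrib sum_distrib_left)

lemma Llift_linear: "linear (Llift cl)"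
  by (intro linearI) (simp_all add: Llift_def Finite_Cartesian_Product.vec_eq_iff add_divide_distrib)

lemma Pagg_Llift:
  assumes part: "surj cl"
  shows "Pagg cl (Llift cl y) = y"
proof -
  have "(Pagg cl (Llift cl y)) $ (l, a) = y $ (l, a)" for l a
  proof -
    obtain i0 where i0: "l = cl i0" using part unfolding surj_def by blast
    have ne: "cluster cl l \<noteq> {}" using i0 unfolding cluster_def by blast
    have "(Pagg cl (Llift cl y)) $ (l, a) = (\<Sum>i\<in>cluster cl l. Llift cl y $ (i, a))"
      unfolding Pagg_def by simp
    also have "\<dots> = (\<Sum>i\<in>cluster cl l. y $ (l, a) / real (card (cluster cl l)))"
    proof (rule sum.cong[OF refl])
      fix i assume "i \<in> cluster cl l"
      hence "cl i = l" unfolding cluster_def by simp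
      thus "Llift cl y $ (i, a) = y $ (l, a) / real (card (cluster cl l))"
        unfolding Llift_def by simp
    qed
    also have "\<dots> = y $ (l, a)" using ne by simp
    finally show ?thesis .
  qed
  thus ?thesis by (simp add: Finite_Cartesian_Product.vec_eq_iff)
qed

lemma lump_comm:
  fixes A :: "'s::finite \<Rightarrow> real^'n::finite^'n" and cl :: "'s \<Rightarrow> 'r::finite"
    and T Tbar :: "'s \<Rightarrow> 's \<Rightarrow> real"
  assumes Tbar_lump: "\<forall>i l. (\<Sum>j\<in>cluster cl l. Tbar i j) = red_T T cl (cl i) l"
  shows "aug (red_T T cl) (red_mat A cl) *v Pagg cl x = Pagg cl (aug Tbar (\<lambda>i. red_mat A cl (cl i)) *v x)"
proof -
  define Kh where "Kh k = kron (red_mat A cl k) (red_mat A cl k)" for k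
  have "(aug (red_T T cl) (red_mat A cl) *v Pagg cl x) $ (l, a) = (Pagg cl (aug Tbar (\<lambda>i. red_mat A cl (cl i)) *v x)) $ (l, a)" for l a
  proof -
    define F where "F j = (\<Sum>b\<in>UNIV. red_T T cl (cl j) l * Kh (cl j) $ a $ b * x $ (j, b))" for j
    have "(aug (red_T T cl) (red_mat A cl) *v Pagg cl x) $ (l, a)
        = (\<Sum>k\<in>UNIV. \<Sum>b\<in>UNIV. red_T T cl k l * Kh k $ a $ b * (\<Sum>j\<in>cluster cl k. x $ (j, b)))"
      by (simp add: matrix_vector_mult_def sum_pair aug_def Pagg_def Kh_def)
    also have "\<dots> = (\<Sum>k\<in>UNIV. \<Sum>b\<in>UNIV. \<Sum>j\<in>cluster cl k. red_T T cl k l * Kh k $ a $ b * x $ (j, b))"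
      by (simp add: sum_distrib_left)
    also have "\<dots> = (\<Sum>k\<in>UNIV. \<Sum>j\<in>cluster cl k. \<Sum>b\<in>UNIV. red_T T cl k l * Kh k $ a $ b * x $ (j, b))"
      by (intro sum.cong refl sum.swap)
    also have "\<dots> = (\<Sum>k\<in>UNIV. \<Sum>j\<in>cluster cl k. F j)"
      unfolding F_def by (intro sum.cong refl) (auto simp: cluster_def)
    also have "\<dots> = (\<Sum>j\<in>UNIV. F j)" by (rule sum_cluster)
    finally have lhs: "(aug (red_T T cl) (red_mat A cl) *v Pagg cl x) $ (l, a) = (\<Sum>j\<in>UNIV. F j)" .
    have "(Pagg cl (aug Tbar (\<lambda>i. red_mat A cl (cl i)) *v x)) $ (l, a)
        = (\<Sum>i\<in>cluster cl l. \<Sum>j\<in>UNIV. \<Sum>b\<in>UNIV. Tbar j i * Kh (cl j) $ a $ b * x $ (j, b))"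
      by (simp add: matrix_vector_mult_def sum_pair aug_def Pagg_def Kh_def)
    also have "\<dots> = (\<Sum>j\<in>UNIV. \<Sum>i\<in>cluster cl l. \<Sum>b\<in>UNIV. Tbar j i * Kh (cl j) $ a $ b * x $ (j, b))"
      by (rule sum.swap)
    also have "\<dots> = (\<Sum>j\<in>UNIV. \<Sum>b\<in>UNIV. \<Sum>i\<in>cluster cl l. Tbar j i * Kh (cl j) $ a $ b * x $ (j, b))"
      by (intro sum.cong refl sum.swap)
    also have "\<dots> = (\<Sum>j\<in>UNIV. \<Sum>b\<in>UNIV. (\<Sum>i\<in>cluster cl l. Tbar j i) * Kh (cl j) $ a $ b * x $ (j, b))"
      by (simp add: sum_distrib_right)
    also have "\<dots> = (\<Sum>j\<in>UNIV. F j)"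
      unfolding F_def using Tbar_lump by simp
    finally show ?thesis using lhs by simp
  qed
  thus ?thesis by (simp add: Finite_Cartesian_Product.vec_eq_iff)
qed

lemma lump_bound:
  fixes A :: "'s::finite \<Rightarrow> real^'n::finite^'n" and cl :: "'s \<Rightarrow> 'r::finite"
    and T Tbar :: "'s \<Rightarrow> 's \<Rightarrow> real"
  assumes part: "surj cl"
    and Tbar_lump: "\<forall>i l. (\<Sum>j\<in>cluster cl l. Tbar i j) = red_T T cl (cl i) l"
    and hb: "\<And>k y. norm (mpow (aug Tbar (\<lambda>i. red_mat A cl (cl i))) k *v y) \<le> \<tau> * r ^ k * norm y"
    and t0: "\<tau> \<ge> 0" and r0: "r \<ge> 0"
  shows "\<exists>K\<ge>0. \<forall>k y. norm (mpow (aug (red_T T cl) (red_mat A cl)) k *v y) \<le> K * r ^ k * norm y"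
proof -
  define Ab where "Ab = aug Tbar (\<lambda>i. red_mat A cl (cl i))"
  define Ah where "Ah = aug (red_T T cl) (red_mat A cl)"
  have comm: "mpow Ah k *v Pagg cl x = Pagg cl (mpow Ab k *v x)" for k x
  proof (induction k arbitrary: x)
    case 0 then show ?case by simp
  next
    case (Suc k)
    have "mpow Ah (Suc k) *v Pagg cl x = Ah *v (mpow Ah k *v Pagg cl x)"
      by (simp add: matrix_vector_mul_assoc)
    also have "\<dots> = Ah *v Pagg cl (mpow Ab k *v x)" using Suc by simp
    also have "\<dots> = Pagg cl (Ab *v (mpow Ab k *v x))" unfolding Ah_def Ab_def by (rule lump_comm[OF Tbar_lump])
    also have "\<dots> = Pagg cl (mpow Ab (Suc k) *v x)" by (simp add: matrix_vector_mul_assoc)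
    finally show ?case .
  qed
  obtain KP where KP: "KP > 0" "\<And>x. norm (Pagg cl x :: real^('r \<times> ('n \<times> 'n))) \<le> KP * norm x"
    using linear_bounded_pos[OF Pagg_linear] by blast
  obtain KL where KL: "KL > 0" "\<And>y. norm (Llift cl y :: real^('s \<times> ('n \<times> 'n))) \<le> KL * norm y"
    using linear_bounded_pos[OF Llift_linear] by blast
  show ?thesis
  proof (intro exI[of _ "KP * \<tau> * KL"] conjI allI)
    show "KP * \<tau> * KL \<ge> 0" using KP KL t0 by simp
    fix k and y :: "real^('r \<times> ('n \<times> 'n))"
    have "mpow Ah k *v y = Pagg cl (mpow Ab k *v Llift cl y)"
      using comm[of k "Llift cl y"] unfolding Pagg_Llift[OF part] .
    hence "norm (mpow Ah k *v y) = norm (Pagg cl (mpow Ab k *v Llift cl y))" by simp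
    also have "\<dots> \<le> KP * norm (mpow Ab k *v Llift cl y)" by (rule KP(2))
    also have "\<dots> \<le> KP * (\<tau> * r ^ k * norm (Llift cl y))"
      unfolding Ab_def by (intro mult_left_mono hb) (use KP in simp)
    also have "\<dots> \<le> KP * (\<tau> * r ^ k * (KL * norm y))"
      using KP t0 r0 by (auto intro!: mult_left_mono KL(2))
    finally have "norm (mpow Ah k *v y) \<le> KP * \<tau> * KL * r ^ k * norm y"
      by (simp add: algebra_simps)
    thus "norm (mpow (aug (red_T T cl) (red_mat A cl)) k *v y) \<le> KP * \<tau> * KL * r ^ k * norm y"
      unfolding Ah_def .
  qed
qed


lemma word_prod_map_inv:
  assumes part: "surj cl"
  shows "word_prod (red_mat A cl) u = word_prod (\<lambda>i. red_mat A cl (cl i)) (map (inv_into UNIV cl) u)"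
  by (induction u) (simp_all add: surj_f_inv_f[OF part])

theorem theorem5:
  fixes A :: "'s::finite \<Rightarrow> real^'n::finite^'n"
    and B :: "'s \<Rightarrow> real^'p::finite^'n"
    and T :: "'s \<Rightarrow> 's \<Rightarrow> real"
    and cl :: "'s \<Rightarrow> 'r::finite"
    and Tbar :: "'s \<Rightarrow> 's \<Rightarrow> real"
    and \<epsilon>A \<epsilon>B \<epsilon>T :: real
  assumes erg: "ergodic T"
    and part: "surj cl"
    and epsA: "(\<Sum>k\<in>UNIV. \<Sum>i\<in>cluster cl k. \<Sum>i'\<in>cluster cl k. frob_norm (A i - A i')) \<le> \<epsilon>A"
    and epsB: "(\<Sum>k\<in>UNIV. \<Sum>i\<in>cluster cl k. \<Sum>i'\<in>cluster cl k. frob_norm (B i - B i')) \<le> \<epsilon>B"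
    and epsT: "approx_lumpable T cl \<epsilon>T \<or> approx_aggregatable T cl \<epsilon>T"
    and Tbar_markov: "markov Tbar"
    and Tbar_inf: "inf_norm (\<lambda>i j. Tbar i j - T i j) \<le> \<epsilon>T"
    and Tbar_frob: "frob_norm_fun (\<lambda>i j. Tbar i j - T i j) \<le> \<epsilon>T"
    and Tbar_lump: "\<forall>i l. (\<Sum>j\<in>cluster cl l. Tbar i j) = red_T T cl (cl i) l"
  defines "Ahat \<equiv> red_mat A cl"
    and "Abar \<equiv> (\<lambda>i. red_mat A cl (cl i))"
    and "\<AA> \<equiv> aug T A"
    and "\<AA>hat \<equiv> aug (red_T T cl) (red_mat A cl)"
    and "\<AA>bar \<equiv> aug Tbar (\<lambda>i. red_mat A cl (cl i))"
    and "\<epsilon>\<rho> \<equiv> sqrt (real CARD('s)) * ((2 * Max ((\<lambda>i. spec_norm (A i)) ` UNIV) + \<epsilon>A) * \<epsilon>A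
          + (Max ((\<lambda>i. spec_norm (A i)) ` UNIV))\<^sup>2 * \<epsilon>T)"
  shows
    "(\<forall>\<rho>. \<rho> \<ge> spectral_radius \<AA> \<and> (\<exists>C. \<forall>k. spec_norm (mpow \<AA> k) \<le> C * \<rho> ^ k)
        \<longrightarrow> spectral_radius \<AA>hat - spectral_radius \<AA>
              \<le> tau_const \<AA> \<rho> * \<epsilon>\<rho> + (\<rho> - spectral_radius \<AA>))
   \<and> (\<forall>\<rho>hat. \<rho>hat \<ge> spectral_radius \<AA>hat \<and> (\<exists>C. \<forall>k. spec_norm (mpow \<AA>bar k) \<le> C * \<rho>hat ^ k)
        \<longrightarrow> spectral_radius \<AA> - spectral_radius \<AA>hat
              \<le> tau_const \<AA>bar \<rho>hat * \<epsilon>\<rho> + (\<rho>hat - spectral_radius \<AA>hat))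
   \<and> (\<forall>\<xi>. \<xi> \<ge> jsr A \<and> (\<exists>C. \<forall>k. max_prod_norm A k \<le> C * \<xi> ^ k)
        \<longrightarrow> jsr Ahat - jsr A \<le> kappa_const A \<xi> * \<epsilon>A + (\<xi> - jsr A))
   \<and> (\<forall>\<xi>hat. \<xi>hat \<ge> jsr Ahat \<and> (\<exists>C. \<forall>k. max_prod_norm Abar k \<le> C * \<xi>hat ^ k)
        \<longrightarrow> jsr A - jsr Ahat \<le> kappa_const Abar \<xi>hat * \<epsilon>A + (\<xi>hat - jsr Ahat))"
proof -
  define AM where "AM = Max ((\<lambda>i. spec_norm (A i)) ` UNIV)"
  have AM0: "AM \<ge> 0" unfolding AM_def by (rule Amax_nonneg)
  have eA0: "\<epsilon>A \<ge> 0" using epsA by (smt (verit) frob_nonneg sum_nonneg)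
  have eT0: "\<epsilon>T \<ge> 0" using Tbar_frob unfolding frob_norm_fun_def
    by (smt (verit) real_sqrt_ge_zero sum_nonneg zero_le_power2)
  have er0: "\<epsilon>\<rho> \<ge> 0" unfolding \<epsilon>\<rho>_def AM_def[symmetric] using AM0 eA0 eT0 by simp
  have hE1: "norm ((\<AA>bar - \<AA>) *v y) \<le> \<epsilon>\<rho> * norm y" for y
    unfolding \<AA>bar_def \<AA>_def \<epsilon>\<rho>_def by (rule pert_aug[OF epsA Tbar_markov Tbar_frob])
  have hE2: "norm ((\<AA> - \<AA>bar) *v y) \<le> \<epsilon>\<rho> * norm y" for y
  proof -
    have "(\<AA> - \<AA>bar) *v y = - ((\<AA>bar - \<AA>) *v y)" by (simp add: matrix_vector_mult_diff_rdistrib)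
    thus ?thesis using hE1[of y] by simp
  qed
  have RA: "norm ((red_mat A cl (cl i) - A i) *v y) \<le> \<epsilon>A * norm y" for i y
    using frob_bound[of "red_mat A cl (cl i) - A i" y] red_diff[OF epsA, of i]
    by (meson mult_right_mono norm_ge_zero order_trans)
  have AR: "norm ((A i - red_mat A cl (cl i)) *v y) \<le> \<epsilon>A * norm y" for i y
  proof -
    have "(A i - red_mat A cl (cl i)) *v y = - ((red_mat A cl (cl i) - A i) *v y)"
      by (simp add: matrix_vector_mult_diff_rdistrib)
    thus ?thesis using RA[of i y] by simp
  qed
  have C1: "\<forall>\<rho>. \<rho> \<ge> spectral_radius \<AA> \<and> (\<exists>C. \<forall>k. spec_norm (mpow \<AA> k) \<le> C * \<rho> ^ k)
        \<longrightarrow> spectral_radius \<AA>hat - spectral_radius \<AA>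
              \<le> tau_const \<AA> \<rho> * \<epsilon>\<rho> + (\<rho> - spectral_radius \<AA>)"
  proof (intro allI impI)
    fix \<rho> assume a: "\<rho> \<ge> spectral_radius \<AA> \<and> (\<exists>C. \<forall>k. spec_norm (mpow \<AA> k) \<le> C * \<rho> ^ k)"
    then obtain C where C: "\<And>k. spec_norm (mpow \<AA> k) \<le> C * \<rho> ^ k" by blast
    have r0: "\<rho> \<ge> 0" using a spectral_radius_nonneg[of \<AA>] by linarith
    define \<tau> where "\<tau> = tau_const \<AA> \<rho>"
    have tb: "spec_norm (mpow \<AA> k) \<le> \<tau> * \<rho> ^ k" for k
      using sup_bound(1)[where f="\<lambda>k. spec_norm (mpow \<AA> k)", OF spec_norm_nonneg r0 C]
      unfolding \<tau>_def tau_const_def .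
    have t0: "\<tau> \<ge> 0"
      using sup_bound(2)[where f="\<lambda>k. spec_norm (mpow \<AA> k)", OF spec_norm_nonneg r0 C]
      unfolding \<tau>_def tau_const_def .
    have hM: "norm (mpow \<AA> k *v y) \<le> \<tau> * \<rho> ^ k * norm y" for k y
      using spec_norm_bound[of "mpow \<AA> k" y] tb[of k] by (meson mult_right_mono norm_ge_zero order_trans)
    have rr: "\<rho> + \<tau> * \<epsilon>\<rho> \<ge> 0" using r0 t0 er0 by simp
    have hb: "norm (mpow (aug Tbar (\<lambda>i. red_mat A cl (cl i))) k *v y) \<le> \<tau> * (\<rho> + \<tau> * \<epsilon>\<rho>) ^ k * norm y" for k y
      using pert_pow[OF hM hE1 t0 r0 er0] unfolding \<AA>bar_def .
    obtain K where K: "K \<ge> 0" "\<And>k y. norm (mpow \<AA>hat k *v y) \<le> K * (\<rho> + \<tau> * \<epsilon>\<rho>) ^ k * norm y"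
      using lump_bound[OF part Tbar_lump hb t0 rr] unfolding \<AA>hat_def by blast
    have "spectral_radius \<AA>hat \<le> \<rho> + \<tau> * \<epsilon>\<rho>"
      by (rule spectral_radius_le[OF K(2) rr K(1)])
    thus "spectral_radius \<AA>hat - spectral_radius \<AA> \<le> tau_const \<AA> \<rho> * \<epsilon>\<rho> + (\<rho> - spectral_radius \<AA>)"
      unfolding \<tau>_def by simp
  qed
  have C2: "\<forall>\<rho>hat. \<rho>hat \<ge> spectral_radius \<AA>hat \<and> (\<exists>C. \<forall>k. spec_norm (mpow \<AA>bar k) \<le> C * \<rho>hat ^ k)
        \<longrightarrow> spectral_radius \<AA> - spectral_radius \<AA>hat
              \<le> tau_const \<AA>bar \<rho>hat * \<epsilon>\<rho> + (\<rho>hat - spectral_radius \<AA>hat)"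
  proof (intro allI impI)
    fix \<rho> assume a: "\<rho> \<ge> spectral_radius \<AA>hat \<and> (\<exists>C. \<forall>k. spec_norm (mpow \<AA>bar k) \<le> C * \<rho> ^ k)"
    then obtain C where C: "\<And>k. spec_norm (mpow \<AA>bar k) \<le> C * \<rho> ^ k" by blast
    have r0: "\<rho> \<ge> 0" using a spectral_radius_nonneg[of \<AA>hat] by linarith
    define \<tau> where "\<tau> = tau_const \<AA>bar \<rho>"
    have tb: "spec_norm (mpow \<AA>bar k) \<le> \<tau> * \<rho> ^ k" for k
      using sup_bound(1)[where f="\<lambda>k. spec_norm (mpow \<AA>bar k)", OF spec_norm_nonneg r0 C]
      unfolding \<tau>_def tau_const_def .
    have t0: "\<tau> \<ge> 0"
      using sup_bound(2)[where f="\<lambda>k. spec_norm (mpow \<AA>bar k)", OF spec_norm_nonneg r0 C]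
      unfolding \<tau>_def tau_const_def .
    have hM: "norm (mpow \<AA>bar k *v y) \<le> \<tau> * \<rho> ^ k * norm y" for k y
      using spec_norm_bound[of "mpow \<AA>bar k" y] tb[of k] by (meson mult_right_mono norm_ge_zero order_trans)
    have rr: "\<rho> + \<tau> * \<epsilon>\<rho> \<ge> 0" using r0 t0 er0 by simp
    have hb: "norm (mpow \<AA> k *v y) \<le> \<tau> * (\<rho> + \<tau> * \<epsilon>\<rho>) ^ k * norm y" for k y
      by (rule pert_pow[OF hM hE2 t0 r0 er0])
    have "spectral_radius \<AA> \<le> \<rho> + \<tau> * \<epsilon>\<rho>"
      by (rule spectral_radius_le[OF hb rr t0])
    thus "spectral_radius \<AA> - spectral_radius \<AA>hat \<le> tau_const \<AA>bar \<rho> * \<epsilon>\<rho> + (\<rho> - spectral_radius \<AA>hat)"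
      unfolding \<tau>_def by simp
  qed
  have C3: "\<forall>\<xi>. \<xi> \<ge> jsr A \<and> (\<exists>C. \<forall>k. max_prod_norm A k \<le> C * \<xi> ^ k)
        \<longrightarrow> jsr Ahat - jsr A \<le> kappa_const A \<xi> * \<epsilon>A + (\<xi> - jsr A)"
  proof (intro allI impI)
    fix \<xi> assume a: "\<xi> \<ge> jsr A \<and> (\<exists>C. \<forall>k. max_prod_norm A k \<le> C * \<xi> ^ k)"
    then obtain C where C: "\<And>k. max_prod_norm A k \<le> C * \<xi> ^ k" by blast
    have x0: "\<xi> \<ge> 0" using a jsr_nonneg[of A] by linarith
    define \<kappa> where "\<kappa> = kappa_const A \<xi>"
    have kb: "max_prod_norm A k \<le> \<kappa> * \<xi> ^ k" for k
      using sup_bound(1)[where f="\<lambda>k. max_prod_norm A k", OF mpn_nonneg x0 C]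
      unfolding \<kappa>_def kappa_const_def .
    have k0: "\<kappa> \<ge> 0"
      using sup_bound(2)[where f="\<lambda>k. max_prod_norm A k", OF mpn_nonneg x0 C]
      unfolding \<kappa>_def kappa_const_def .
    have hM: "norm (word_prod A w *v y) \<le> \<kappa> * \<xi> ^ length w * norm y" for w y
    proof -
      have "spec_norm (word_prod A w) \<le> \<kappa> * \<xi> ^ length w" using mpn_ge[of w "length w" A] kb[of "length w"] by simp
      thus ?thesis using spec_norm_bound[of "word_prod A w" y] by (meson mult_right_mono norm_ge_zero order_trans)
    qed
    have xx: "\<xi> + \<kappa> * \<epsilon>A \<ge> 0" using x0 k0 eA0 by simp
    have pw: "norm (word_prod (\<lambda>i. red_mat A cl (cl i)) u *v y) \<le> \<kappa> * (\<xi> + \<kappa> * \<epsilon>A) ^ length u * norm y" for u y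
      by (rule pert_words[OF hM RA k0 x0 eA0])
    have "max_prod_norm Ahat k \<le> \<kappa> * (\<xi> + \<kappa> * \<epsilon>A) ^ k" for k
    proof (rule mpn_le)
      fix u :: "'r list" assume u: "length u = k"
      show "spec_norm (word_prod Ahat u) \<le> \<kappa> * (\<xi> + \<kappa> * \<epsilon>A) ^ k"
      proof (rule spec_norm_le)
        show "0 \<le> \<kappa> * (\<xi> + \<kappa> * \<epsilon>A) ^ k" using k0 xx by simp
        fix y
        show "norm (word_prod Ahat u *v y) \<le> \<kappa> * (\<xi> + \<kappa> * \<epsilon>A) ^ k * norm y"
          unfolding Ahat_def word_prod_map_inv[OF part] using pw[of "map (inv_into UNIV cl) u" y] u by simp
      qed
    qed
    hence "jsr Ahat \<le> \<xi> + \<kappa> * \<epsilon>A" by (rule jsr_le[OF _ xx k0])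
    thus "jsr Ahat - jsr A \<le> kappa_const A \<xi> * \<epsilon>A + (\<xi> - jsr A)" unfolding \<kappa>_def by simp
  qed
  have C4: "\<forall>\<xi>hat. \<xi>hat \<ge> jsr Ahat \<and> (\<exists>C. \<forall>k. max_prod_norm Abar k \<le> C * \<xi>hat ^ k)
        \<longrightarrow> jsr A - jsr Ahat \<le> kappa_const Abar \<xi>hat * \<epsilon>A + (\<xi>hat - jsr Ahat)"
  proof (intro allI impI)
    fix \<xi> assume a: "\<xi> \<ge> jsr Ahat \<and> (\<exists>C. \<forall>k. max_prod_norm Abar k \<le> C * \<xi> ^ k)"
    then obtain C where C: "\<And>k. max_prod_norm Abar k \<le> C * \<xi> ^ k" by blast
    have x0: "\<xi> \<ge> 0" using a jsr_nonneg[of Ahat] by linarith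
    define \<kappa> where "\<kappa> = kappa_const Abar \<xi>"
    have kb: "max_prod_norm Abar k \<le> \<kappa> * \<xi> ^ k" for k
      using sup_bound(1)[where f="\<lambda>k. max_prod_norm Abar k", OF mpn_nonneg x0 C]
      unfolding \<kappa>_def kappa_const_def .
    have k0: "\<kappa> \<ge> 0"
      using sup_bound(2)[where f="\<lambda>k. max_prod_norm Abar k", OF mpn_nonneg x0 C]
      unfolding \<kappa>_def kappa_const_def .
    have hM: "norm (word_prod Abar w *v y) \<le> \<kappa> * \<xi> ^ length w * norm y" for w y
    proof -
      have "spec_norm (word_prod Abar w) \<le> \<kappa> * \<xi> ^ length w" using mpn_ge[of w "length w" Abar] kb[of "length w"] by simp
      thus ?thesis using spec_norm_bound[of "word_prod Abar w" y] by (meson mult_right_mono norm_ge_zero order_trans)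
    qed
    have hE: "norm ((A i - Abar i) *v y) \<le> \<epsilon>A * norm y" for i y unfolding Abar_def using AR .
    have xx: "\<xi> + \<kappa> * \<epsilon>A \<ge> 0" using x0 k0 eA0 by simp
    have pw: "norm (word_prod A u *v y) \<le> \<kappa> * (\<xi> + \<kappa> * \<epsilon>A) ^ length u * norm y" for u y
      by (rule pert_words[OF hM hE k0 x0 eA0])
    have "max_prod_norm A k \<le> \<kappa> * (\<xi> + \<kappa> * \<epsilon>A) ^ k" for k
    proof (rule mpn_le)
      fix u :: "'s list" assume u: "length u = k"
      show "spec_norm (word_prod A u) \<le> \<kappa> * (\<xi> + \<kappa> * \<epsilon>A) ^ k"
      proof (rule spec_norm_le)
        show "0 \<le> \<kappa> * (\<xi> + \<kappa> * \<epsilon>A) ^ k" using k0 xx by simp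
        fix y
        show "norm (word_prod A u *v y) \<le> \<kappa> * (\<xi> + \<kappa> * \<epsilon>A) ^ k * norm y"
          using pw[of u y] u by simp
      qed
    qed
    hence "jsr A \<le> \<xi> + \<kappa> * \<epsilon>A" by (rule jsr_le[OF _ xx k0])
    thus "jsr A - jsr Ahat \<le> kappa_const Abar \<xi> * \<epsilon>A + (\<xi> - jsr Ahat)" unfolding \<kappa>_def by simp
  qed
  show ?thesis using C1 C2 C3 C4 by blast
qed


end
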